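(* Let $\Omega\subset\mathbb R^d$ be a regular set with $\mu_d(\Omega)>0$ and let $f:\Omega\to\mathbb R$ be continuous almost everywhere with $\mathcal{ER}(f)$ connected. Take any closed $d$-dimensional rectangle $[\mathbf a,\mathbf b]\supseteq\Omega$, any $\mathbf n=\mathbf n(n)\in\mathbb N^d$ with $\mathbf n\to\infty$, and any asymptotically uniform grid $\{\mathbf x_{\mathbf i,\mathbf n}^{(n)}\}_{\mathbf i=\mathbf 1,\ldots,\mathbf n}$ in $[\mathbf a,\mathbf b]$. For every $n$, sort the samples $f(\mathbf x_{\mathbf i,\mathbf n}^{(n)})$, $\mathbf i\in\mathcal I_{\mathbf n}^{(n)}(\Omega)=\{\mathbf i\in\{\mathbf 1,\ldots,\mathbf n\}:\mathbf x_{\mathbf i,\mathbf n}^{(n)}\in\Omega\}$, increasingly into $[s_0,\ldots,s_{\omega(n)}]$ with $\omega(n)=|\mathcal I_{\mathbf n}^{(n)}(\Omega)|-1$, and let $f^\dagger_n:[0,1]\to\mathbb R$ be the linear spline interpolating $s_0,\ldots,s_{\omega(n)}$ at the nodes $0,\frac1{\omega(n)},\ldots,1$. Then: 1. $f^\dagger_n\to f^\dagger$ uniformly on every compact interval $[\alpha,\beta]\subset(0,1)$; 2. if $f$ is bounded from below on $\Omega$ with $\inf_\Omega f=\operatorname{ess\,inf}_\Omega f$, then $f_n^\dagger\to f^\dagger$ uniformly on every compact interval $[0,\alpha]\subset[0,1)$; 3. if $f$ is bounded from above on $\Omega$ with $\sup_\Omega f=\operatorname{ess\,sup}_\Omega f$,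 then $f_n^\dagger\to f^\dagger$ uniformly on every compact interval $[\alpha,1]\subset(0,1]$; 4. if $f$ is bounded on $\Omega$ and $\mathcal{ER}(f)=[\inf_\Omega f,\sup_\Omega f]$, then $f_n^\dagger\to f^\dagger$ uniformly on $[0,1]$.
   Context: $\Omega\subset\mathbb R^d$ is regular if bounded with $\mu_d(\partial\Omega)=0$. $\mathcal{ER}(f)=\{z\in\mathbb R:\mu_d\{\mathbf x\in\Omega:|f(\mathbf x)-z|<\epsilon\}>0\ \forall\epsilon>0\}$, $\operatorname{ess\,inf}_\Omega f=\inf\mathcal{ER}(f)$, $\operatorname{ess\,sup}_\Omega f=\sup\mathcal{ER}(f)$. Monotone rearrangement: $f^\dagger(y)=\inf\{u\in\mathbb R:\mu_d\{f\le u\}/\mu_d(\Omega)\ge y\}$ for $y\in(0,1)$, extended by $f^\dagger(0)=\operatorname{ess\,inf}_\Omega f$ when this is $>-\infty$ and $f^\dagger(1)=\operatorname{ess\,sup}_\Omega f$ when this is $<\infty$. Multi-index notation: $\mathbf n\to\infty$ means $\min_j n_j\to\infty$; $\{\mathbf 1,\ldots,\mathbf n\}=\{\mathbf i\in\mathbb Z^d:\mathbf 1\le\mathbf i\le\mathbf n\}$; operations componentwise. The grid is asymptotically uniform in $[\mathbf a,\mathbf b]$ if $\max_{\mathbf i}\|\mathbf x_{\mathbf i,\mathbf n}^{(n)}-(\mathbf a+\mathbf i(\mathbf b-\mathbf a)/\mathbf n)\|_\infty\to0$. *)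

theory Defs
  imports "HOL-Analysis.Analysis" "HOL-Library.Multiset"
begin

definition regular_set :: "(real^'d) set \<Rightarrow> bool" where
  "regular_set \<Omega> \<longleftrightarrow> bounded \<Omega> \<and> frontier \<Omega> \<in> null_sets lebesgue"

definition cont_ae_on :: "(real^'d) set \<Rightarrow> (real^'d \<Rightarrow> real) \<Rightarrow> bool" where
  "cont_ae_on \<Omega> f \<longleftrightarrow> (AE x in lebesgue. x \<in> \<Omega> \<longrightarrow> continuous (at x within \<Omega>) f)"

definition ess_range :: "(real^'d) set \<Rightarrow> (real^'d \<Rightarrow> real) \<Rightarrow> real set" where
  "ess_range \<Omega> f = {z. \<forall>\<epsilon>>0. emeasure lebesgue {x\<in>\<Omega>. \<bar>f x - z\<bar> < \<epsilon>} > 0}"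

definition ess_inf_on :: "(real^'d) set \<Rightarrow> (real^'d \<Rightarrow> real) \<Rightarrow> real" where
  "ess_inf_on \<Omega> f = Inf (ess_range \<Omega> f)"

definition ess_sup_on :: "(real^'d) set \<Rightarrow> (real^'d \<Rightarrow> real) \<Rightarrow> real" where
  "ess_sup_on \<Omega> f = Sup (ess_range \<Omega> f)"

text \<open>Monotone rearrangement f-dagger on [0,1]; the endpoint values are only
  meaningful when the essential infimum/supremum is finite.\<close>
definition mono_rearr :: "(real^'d) set \<Rightarrow> (real^'d \<Rightarrow> real) \<Rightarrow> real \<Rightarrow> real" where
  "mono_rearr \<Omega> f y =
     (if y = 0 then ess_inf_on \<Omega> f
      else if y = 1 then ess_sup_on \<Omega> f
      else Inf {u. measure lebesgue {x\<in>\<Omega>. f x \<le> u} / measure lebesgue \<Omega> \<ge> y})"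

definition mindex :: "('d \<Rightarrow> nat) \<Rightarrow> ('d \<Rightarrow> nat) set" where
  "mindex N = {i. \<forall>j. 1 \<le> i j \<and> i j \<le> N j}"

definition unif_point :: "real^'d \<Rightarrow> real^'d \<Rightarrow> ('d \<Rightarrow> nat) \<Rightarrow> ('d \<Rightarrow> nat) \<Rightarrow> real^'d" where
  "unif_point a b N i = (\<chi> j. a $ j + real (i j) * (b $ j - a $ j) / real (N j))"

text \<open>Asymptotically uniform grid (x n i is the point with index i of the n-th grid,
  which has multi-size N n) in [a,b].\<close>
definition asympt_uniform_grid ::
  "real^'d \<Rightarrow> real^'d \<Rightarrow> (nat \<Rightarrow> 'd \<Rightarrow> nat) \<Rightarrow> (nat \<Rightarrow> ('d \<Rightarrow> nat) \<Rightarrow> real^'d) \<Rightarrow> bool" where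
  "asympt_uniform_grid a b N x \<longleftrightarrow>
     (\<forall>n. \<forall>i\<in>mindex (N n). x n i \<in> cbox a b) \<and>
     (\<forall>\<epsilon>>0. eventually (\<lambda>n. \<forall>i\<in>mindex (N n).
        infnorm (x n i - unif_point a b (N n) i) \<le> \<epsilon>) sequentially)"

definition lin_spline :: "real list \<Rightarrow> real \<Rightarrow> real" where
  "lin_spline s y =
     (let w = length s - 1; t = y * real w; k = nat \<lfloor>t\<rfloor> in
      if k \<ge> w then s ! w else s ! k + (t - real k) * (s ! (k+1) - s ! k))"

definition sorted_samples ::
  "(real^'d) set \<Rightarrow> (real^'d \<Rightarrow> real) \<Rightarrow> ('d \<Rightarrow> nat) \<Rightarrow> (('d \<Rightarrow> nat) \<Rightarrow> real^'d) \<Rightarrow> real list" where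
  "sorted_samples \<Omega> f N xg =
     sorted_list_of_multiset
       (image_mset (\<lambda>i. f (xg i)) (mset_set {i\<in>mindex N. xg i \<in> \<Omega>}))"

definition sample_rearr ::
  "(real^'d) set \<Rightarrow> (real^'d \<Rightarrow> real) \<Rightarrow> ('d \<Rightarrow> nat) \<Rightarrow> (('d \<Rightarrow> nat) \<Rightarrow> real^'d) \<Rightarrow> real \<Rightarrow> real" where
  "sample_rearr \<Omega> f N xg = lin_spline (sorted_samples \<Omega> f N xg)"

end

theory Submission
  imports Defs
begin

lemma sorted_nth_lt_count:
  fixes s :: "real list"
  assumes "sorted s" "k < length s" "k < length (filter (\<lambda>v. v < u) s)"
  shows "s ! k < u"
proof (rule ccontr)
  assume "\<not> s ! k < u"
  have "{i. i < length s \<and> s ! i < u} \<subseteq> {..<k}"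
  proof
    fix i assume i: "i \<in> {i. i < length s \<and> s ! i < u}"
    show "i \<in> {..<k}"
    proof (rule ccontr)
      assume "i \<notin> {..<k}"
      then have "s ! k \<le> s ! i" using i sorted_nth_mono[OF assms(1), of k i] by simp
      then show False using i \<open>\<not> s ! k < u\<close> by simp
    qed
  qed
  then have "card {i. i < length s \<and> s ! i < u} \<le> k"
    using card_mono[of "{..<k}"] by (metis card_lessThan finite_lessThan)
  then show False using assms(3) by (simp add: length_filter_conv_card)
qed

lemma sorted_nth_gt_count:
  fixes s :: "real list"
  assumes "sorted s" "k < length s" "length (filter (\<lambda>v. v \<le> u) s) \<le> k"
  shows "s ! k > u"
proof (rule ccontr)
  assume "\<not> s ! k > u"
  have "{..k} \<subseteq> {i. i < length s \<and> s ! i \<le> u}"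
  proof
    fix i assume i: "i \<in> {..k}"
    then have "s ! i \<le> s ! k" using assms(2) sorted_nth_mono[OF assms(1), of i k] by simp
    then show "i \<in> {i. i < length s \<and> s ! i \<le> u}" using i assms(2) \<open>\<not> s ! k > u\<close> by simp
  qed
  then have "card {..k} \<le> card {i. i < length s \<and> s ! i \<le> u}"
    by (intro card_mono) auto
  then show False using assms(3) by (simp add: length_filter_conv_card)
qed

lemma lin_spline_bracket:
  fixes s :: "real list" and y :: real
  assumes "sorted s" "length s \<ge> 1" "0 \<le> y" "y \<le> 1"
  shows "\<exists>k1 k2. k1 < length s \<and> k2 < length s \<and> real k1 \<ge> y * length s - 2 \<and>
           real k2 \<le> y * length s + 1 \<and> s ! k1 \<le> lin_spline s y \<and> lin_spline s y \<le> s ! k2"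
proof -
  define L where "L = length s"
  define w where "w = L - 1"
  define t where "t = y * real w"
  define k where "k = nat \<lfloor>t\<rfloor>"
  have wL: "real w = real L - 1" using assms(2) by (simp add: w_def L_def)
  have t0: "0 \<le> t" using assms by (simp add: t_def)
  have tw: "t \<le> real w" using assms by (simp add: t_def mult_left_le_one_le)
  have kt: "real k \<le> t" "t < real k + 1" using t0 unfolding k_def by linarith+
  have sp: "lin_spline s y = (if k \<ge> w then s ! w else s ! k + (t - real k) * (s ! (k+1) - s ! k))"
    by (simp only: lin_spline_def Let_def L_def w_def t_def k_def)
  have yL: "y * real L \<le> real L" using assms by (simp add: mult_left_le_one_le)
  have twL: "t \<le> y * real L" using assms wL by (simp add: t_def mult_left_mono)
  have "t = y * real L - y" by (simp add: t_def wL right_diff_distrib)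
  then have twL2: "t \<ge> y * real L - 1" using assms by linarith
  have Lpos: "w < L" using assms(2) by (simp add: w_def L_def)
  show ?thesis
  proof (cases "k \<ge> w")
    case True
    then have "real w \<le> y * real L" using kt twL by linarith
    moreover have "lin_spline s y = s ! w" using sp True by simp
    ultimately show ?thesis using yL wL Lpos
      by (intro exI[of _ w]) (simp add: L_def)
  next
    case False
    have mono: "s ! k \<le> s ! (k+1)" using False assms(1)
      by (intro sorted_nth_mono) (auto simp: w_def L_def)
    have d: "0 \<le> t - real k" "t - real k \<le> 1" using kt by auto
    have "(t - real k) * (s ! (k+1) - s ! k) \<le> 1 * (s ! (k+1) - s ! k)"
      using d mono by (intro mult_right_mono) auto
    moreover have "0 \<le> (t - real k) * (s ! (k+1) - s ! k)" using d mono by simp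
    ultimately have b: "s ! k \<le> lin_spline s y" "lin_spline s y \<le> s ! (k+1)"
      using sp False by auto
    have "k + 1 < L" using False Lpos by simp
    moreover have "real k \<ge> y * real L - 2" using kt twL2 by linarith
    moreover have "real (k+1) \<le> y * real L + 1" using kt twL by simp
    ultimately have "k < length s \<and> k+1 < length s \<and> y*real(length s) - 2 \<le> real k \<and>
       real (k+1) \<le> y*real(length s)+1 \<and> s!k \<le> lin_spline s y \<and> lin_spline s y \<le> s!(k+1)"
      using b Lpos unfolding L_def by linarith
    then show ?thesis by blast
  qed
qed

lemma finite_grid:
  fixes lo hi \<eta> :: real
  assumes "lo \<le> hi" "\<eta> > 0"
  shows "\<exists>G. finite G \<and> G \<subseteq> {lo..hi} \<and>
           (\<forall>y\<in>{lo..hi}. \<exists>y1\<in>G. \<exists>y2\<in>G. y1 \<le> y \<and> y \<le> y2 \<and> y2 - y1 < \<eta>)"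
proof -
  define M :: nat where "M = nat \<lceil>(hi - lo) / \<eta>\<rceil> + 1"
  define h where "h = (hi - lo) / real M"
  have M0: "real M > 0" by (simp add: M_def)
  have "real M > (hi - lo) / \<eta>" unfolding M_def by linarith
  then have "(hi - lo) < real M * \<eta>" using assms(2) by (simp add: field_simps)
  then have hlt: "h < \<eta>" using M0 by (simp add: h_def field_simps)
  have h0: "h \<ge> 0" using assms M0 by (simp add: h_def)
  have hM: "real M * h = hi - lo" using M0 by (simp add: h_def)
  define pt where "pt j = lo + real j * h" for j :: nat
  define G where "G = pt ` {..M}"
  have Gsub: "G \<subseteq> {lo..hi}"
  proof
    fix z assume "z \<in> G"
    then obtain j where j: "j \<le> M" "z = pt j" by (auto simp: G_def)
    have "real j * h \<le> real M * h" using j h0 by (simp add: mult_right_mono)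
    then show "z \<in> {lo..hi}" using j h0 hM by (simp add: pt_def)
  qed
  have "\<forall>y\<in>{lo..hi}. \<exists>y1\<in>G. \<exists>y2\<in>G. y1 \<le> y \<and> y \<le> y2 \<and> y2 - y1 < \<eta>"
  proof
    fix y assume y: "y \<in> {lo..hi}"
    show "\<exists>y1\<in>G. \<exists>y2\<in>G. y1 \<le> y \<and> y \<le> y2 \<and> y2 - y1 < \<eta>"
    proof (cases "h = 0")
      case True
      then have "y = lo" "pt 0 = lo" using y hM M0 by (auto simp: pt_def)
      moreover have "pt 0 \<in> G" by (auto simp: G_def)
      ultimately show ?thesis using assms(2) by (intro bexI[of _ "pt 0"]) auto
    next
      case False
      then have hp: "h > 0" using h0 by simp
      define j where "j = nat \<lfloor>(y - lo) / h\<rfloor>"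
      have q0: "(y - lo) / h \<ge> 0" using y hp by simp
      have qM: "(y - lo) / h \<le> real M" using y hp hM by (simp add: field_simps)
      have j1: "real j \<le> (y - lo) / h" "(y - lo) / h < real j + 1"
        using q0 unfolding j_def by linarith+
      have jM: "j \<le> M" using j1 qM by linarith
      have pj: "pt j \<le> y" using j1 hp by (simp add: pt_def field_simps)
      have pj1: "y < pt (j+1)" using j1 hp by (simp add: pt_def field_simps)
      show ?thesis
      proof (cases "j = M")
        case True
        then have "pt j = hi" using hM by (simp add: pt_def)
        then have "y = pt j" using pj y by simp
        moreover have "pt j \<in> G" using jM by (auto simp: G_def)
        ultimately show ?thesis using assms(2) by (intro bexI[of _ "pt j"]) auto
      next
        case False
        then have "pt j \<in> G" "pt (j+1) \<in> G" using jM by (auto simp: G_def)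
        moreover have "pt (j+1) - pt j = h" by (simp add: pt_def algebra_simps)
        ultimately show ?thesis using pj pj1 hlt by (intro bexI[of _ "pt j"] bexI[of _ "pt (j+1)"]) auto
      qed
    qed
  qed
  moreover have "finite G" by (simp add: G_def)
  ultimately show ?thesis using Gsub by blast
qed

lemma conv_abstract:
  fixes s :: "nat \<Rightarrow> real list" and g :: "real \<Rightarrow> real" and lo hi :: real
  assumes srt: "\<And>n. sorted (s n)"
    and Linf: "filterlim (\<lambda>n. length (s n)) at_top sequentially"
    and lohi: "0 \<le> lo" "lo \<le> hi" "hi \<le> 1"
    and gc: "continuous_on {lo..hi} g"
    and HU: "\<And>y \<epsilon>. y \<in> {lo..hi} \<Longrightarrow> \<epsilon> > 0 \<Longrightarrow> \<exists>\<delta>>0. eventually (\<lambda>n. \<forall>k<length (s n).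
               real k \<le> (y + \<delta>) * real (length (s n)) \<longrightarrow> s n ! k \<le> g y + \<epsilon>) sequentially"
    and HL: "\<And>y \<epsilon>. y \<in> {lo..hi} \<Longrightarrow> \<epsilon> > 0 \<Longrightarrow> \<exists>\<delta>>0. eventually (\<lambda>n. \<forall>k<length (s n).
               real k \<ge> (y - \<delta>) * real (length (s n)) \<longrightarrow> s n ! k \<ge> g y - \<epsilon>) sequentially"
  shows "uniform_limit {lo..hi} (\<lambda>n. lin_spline (s n)) g sequentially"
  unfolding uniform_limit_iff
proof (intro allI impI)
  fix e :: real assume e: "e > 0"
  define \<epsilon> where "\<epsilon> = e / 3"
  have \<epsilon>: "\<epsilon> > 0" using e by (simp add: \<epsilon>_def)
  have "uniformly_continuous_on {lo..hi} g"
    using gc by (intro compact_uniformly_continuous) auto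
  then obtain \<eta> where \<eta>: "\<eta> > 0" and uc: "\<And>y y'. y \<in> {lo..hi} \<Longrightarrow> y' \<in> {lo..hi} \<Longrightarrow>
      dist y' y < \<eta> \<Longrightarrow> dist (g y') (g y) < \<epsilon>"
    unfolding uniformly_continuous_on_def using \<epsilon> by metis
  obtain G where G: "finite G" "G \<subseteq> {lo..hi}"
    and Gc: "\<And>y. y \<in> {lo..hi} \<Longrightarrow> \<exists>y1\<in>G. \<exists>y2\<in>G. y1 \<le> y \<and> y \<le> y2 \<and> y2 - y1 < \<eta>"
    using finite_grid[OF lohi(2) \<eta>] by blast
  define Q where "Q y0 n \<longleftrightarrow> (\<forall>k<length (s n). (real k \<le> y0 * real (length (s n)) + 1 \<longrightarrow> s n ! k \<le> g y0 + \<epsilon>)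
      \<and> (real k \<ge> y0 * real (length (s n)) - 2 \<longrightarrow> s n ! k \<ge> g y0 - \<epsilon>))" for y0 n
  have "\<forall>y0\<in>G. eventually (Q y0) sequentially"
  proof
    fix y0 assume "y0 \<in> G"
    then have y0: "y0 \<in> {lo..hi}" using G by auto
    obtain \<delta>1 where d1: "\<delta>1 > 0" and E1: "eventually (\<lambda>n. \<forall>k<length (s n).
               real k \<le> (y0 + \<delta>1) * real (length (s n)) \<longrightarrow> s n ! k \<le> g y0 + \<epsilon>) sequentially"
      using HU[OF y0 \<epsilon>] by blast
    obtain \<delta>2 where d2: "\<delta>2 > 0" and E2: "eventually (\<lambda>n. \<forall>k<length (s n).
               real k \<ge> (y0 - \<delta>2) * real (length (s n)) \<longrightarrow> s n ! k \<ge> g y0 - \<epsilon>) sequentially"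
      using HL[OF y0 \<epsilon>] by blast
    have "filterlim (\<lambda>n. real (length (s n))) at_top sequentially"
      using Linf filterlim_real_sequentially filterlim_compose by blast
    then have E3: "eventually (\<lambda>n. real (length (s n)) \<ge> max (1/\<delta>1) (2/\<delta>2)) sequentially"
      unfolding filterlim_at_top by blast
    show "eventually (Q y0) sequentially"
      using E1 E2 E3
    proof eventually_elim
      case (elim n)
      define L where "L = real (length (s n))"
      have L1: "L * \<delta>1 \<ge> 1" using elim(3) d1 by (simp add: L_def field_simps)
      have L2: "L * \<delta>2 \<ge> 2" using elim(3) d2 by (simp add: L_def field_simps)
      show ?case unfolding Q_def
      proof (intro allI impI conjI)
        fix k assume k: "k < length (s n)" "real k \<le> y0 * real (length (s n)) + 1"
        then have "real k \<le> (y0 + \<delta>1) * real (length (s n))" using L1 by (simp add: L_def algebra_simps)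
        then show "s n ! k \<le> g y0 + \<epsilon>" using elim(1) k by blast
      next
        fix k assume k: "k < length (s n)" "real k \<ge> y0 * real (length (s n)) - 2"
        then have "real k \<ge> (y0 - \<delta>2) * real (length (s n))" using L2 by (simp add: L_def algebra_simps)
        then show "s n ! k \<ge> g y0 - \<epsilon>" using elim(2) k by blast
      qed
    qed
  qed
  then have EQ: "eventually (\<lambda>n. \<forall>y0\<in>G. Q y0 n) sequentially"
    using G(1) by (intro eventually_ball_finite) auto
  have EL: "eventually (\<lambda>n. length (s n) \<ge> 1) sequentially"
    using Linf by (simp add: filterlim_at_top)
  show "eventually (\<lambda>n. \<forall>y\<in>{lo..hi}. dist (lin_spline (s n) y) (g y) < e) sequentially"
    using EQ EL
  proof eventually_elim
    case (elim n)
    show ?case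
    proof
      fix y assume y: "y \<in> {lo..hi}"
      obtain y1 y2 where yy: "y1 \<in> G" "y2 \<in> G" "y1 \<le> y" "y \<le> y2" "y2 - y1 < \<eta>"
        using Gc[OF y] by blast
      have y01: "0 \<le> y" "y \<le> 1" using y lohi by auto
      obtain k1 k2 where kk: "k1 < length (s n)" "k2 < length (s n)"
        "real k1 \<ge> y * length (s n) - 2" "real k2 \<le> y * length (s n) + 1"
        "s n ! k1 \<le> lin_spline (s n) y" "lin_spline (s n) y \<le> s n ! k2"
        using lin_spline_bracket[OF srt elim(2) y01] by blast
      have Lnn: "real (length (s n)) \<ge> 0" by simp
      have "y1 * length (s n) \<le> y * length (s n)" using yy(3) by (intro mult_right_mono) auto
      then have "s n ! k1 \<ge> g y1 - \<epsilon>" using elim(1) yy(1) kk(1,3) unfolding Q_def by force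
      moreover have "y * length (s n) \<le> y2 * length (s n)" using yy(4) by (intro mult_right_mono) auto
      then have "s n ! k2 \<le> g y2 + \<epsilon>" using elim(1) yy(2) kk(2,4) unfolding Q_def by force
      moreover have "dist (g y1) (g y) < \<epsilon>"
        using uc[of y y1] yy y G by (auto simp: dist_real_def)
      moreover have "dist (g y2) (g y) < \<epsilon>"
        using uc[of y y2] yy y G by (auto simp: dist_real_def)
      ultimately show "dist (lin_spline (s n) y) (g y) < e"
        using kk(5,6) unfolding dist_real_def \<epsilon>_def abs_less_iff by linarith
    qed
  qed
qed

lemma mindex_eq: "mindex M = Pi\<^sub>E UNIV (\<lambda>j. {1..M j})"
  by (auto simp: mindex_def PiE_UNIV_domain Pi_def)

lemma finite_mindex: "finite (mindex (M :: 'd::finite \<Rightarrow> nat))"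
  unfolding mindex_eq by (intro finite_PiE) auto

lemma card_mindex: "card (mindex (M :: 'd::finite \<Rightarrow> nat)) = (\<Prod>j\<in>UNIV. M j)"
  unfolding mindex_eq by (subst card_PiE) auto

lemma measure_lebesgue_cbox_cart:
  fixes l u :: "real^'d"
  assumes "\<And>j. l $ j \<le> u $ j"
  shows "measure lebesgue (cbox l u) = (\<Prod>j\<in>UNIV. u $ j - l $ j)"
proof -
  have "l \<in> cbox l u" using assms by (simp add: mem_box_cart)
  then have "cbox l u \<noteq> {}" by blast
  then show ?thesis
    by (subst measure_completion) (auto simp: content_cbox_cart)
qed

lemma coord_cover:
  fixes c :: real and M :: nat
  assumes "0 \<le> c" "c \<le> real M" "M \<ge> 1"
  defines "i \<equiv> max 1 (nat \<lceil>c\<rceil>)"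
  shows "1 \<le> i" "i \<le> M" "real i - 1 \<le> c" "c \<le> real i"
proof -
  show "1 \<le> i" by (simp add: i_def)
  have "nat \<lceil>c\<rceil> \<le> M" using assms(2) by (simp add: nat_le_iff ceiling_le_iff)
  then show "i \<le> M" using assms(3) by (simp add: i_def)
  show "real i - 1 \<le> c" unfolding i_def using assms(1) by (cases "c \<le> 0") (auto, linarith)
  show "c \<le> real i" unfolding i_def by (simp add: of_nat_nat max_def) linarith
qed

lemma grid_cover:
  fixes a b y :: "real^'d" and M :: "'d \<Rightarrow> nat"
  assumes ab: "\<And>j. a $ j < b $ j" and M1: "\<And>j. M j \<ge> 1" and y: "y \<in> cbox a b"
  shows "\<exists>i\<in>mindex M. \<forall>j. unif_point a b M i $ j - (b $ j - a $ j) / real (M j) \<le> y $ j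
            \<and> y $ j \<le> unif_point a b M i $ j"
proof -
  define c where "c j = (y $ j - a $ j) * real (M j) / (b $ j - a $ j)" for j
  define i where "i j = max 1 (nat \<lceil>c j\<rceil>)" for j
  have c0: "0 \<le> c j" for j using y ab[of j] by (auto simp: c_def mem_box_cart)
  have cM: "c j \<le> real (M j)" for j
  proof -
    have "y $ j - a $ j \<le> b $ j - a $ j" using y by (auto simp: mem_box_cart)
    then have "(y $ j - a $ j) * real (M j) \<le> (b $ j - a $ j) * real (M j)"
      by (intro mult_right_mono) auto
    then show ?thesis using ab[of j] by (simp add: c_def divide_le_eq mult.commute)
  qed
  note cc = coord_cover[OF c0 cM M1, folded i_def]
  have "i \<in> mindex M" using cc by (auto simp: mindex_def)
  moreover have "unif_point a b M i $ j - (b $ j - a $ j) / real (M j) \<le> y $ j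
            \<and> y $ j \<le> unif_point a b M i $ j" for j
  proof -
    define h where "h = (b $ j - a $ j) / real (M j)"
    have h0: "h > 0" using ab[of j] M1[of j] by (simp add: h_def)
    have ych: "y $ j - a $ j = c j * h" using M1[of j] ab[of j] by (simp add: c_def h_def field_simps)
    have up: "unif_point a b M i $ j = a $ j + real (i j) * h" by (simp add: unif_point_def h_def)
    have "(real (i j) - 1) * h \<le> c j * h" "c j * h \<le> real (i j) * h"
      using cc[of j] h0 by (intro mult_right_mono; simp)+
    then show ?thesis using up ych by (simp add: h_def[symmetric] algebra_simps)
  qed
  ultimately show ?thesis by blast
qed

lemma closed_lebesgue: "closed (S :: 'a::euclidean_space set) \<Longrightarrow> S \<in> sets lebesgue"
  by (simp add: borel_closed sets_completionI_sets)

lemma open_lebesgue: "open (S :: 'a::euclidean_space set) \<Longrightarrow> S \<in> sets lebesgue"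
  by (simp add: borel_open sets_completionI_sets)

locale gridset =
  fixes a b :: "real^'d" and N :: "nat \<Rightarrow> 'd \<Rightarrow> nat" and x :: "nat \<Rightarrow> ('d \<Rightarrow> nat) \<Rightarrow> real^'d"
  assumes ab: "\<And>j. a $ j < b $ j"
    and Ninf: "\<And>j. filterlim (\<lambda>n. N n j) at_top sequentially"
    and grid: "asympt_uniform_grid a b N x"
begin

definition "vol = (\<Prod>j\<in>UNIV. b $ j - a $ j)"
definition "W n = vol / real (\<Prod>j\<in>UNIV. N n j)"
definition "hv n = (\<chi> j. (b $ j - a $ j) / real (N n j))"
definition "cell n i = cbox (unif_point a b (N n) i - hv n) (unif_point a b (N n) i)"

lemma vol_pos: "vol > 0"
  unfolding vol_def using ab by (intro prod_pos) (auto simp: algebra_simps)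

lemma measure_box: "measure lebesgue (cbox a b) = vol"
  unfolding vol_def using ab by (intro measure_lebesgue_cbox_cart) (simp add: less_imp_le)

lemma ev_N1: "eventually (\<lambda>n. \<forall>j. N n j \<ge> 1) sequentially"
  using Ninf by (intro eventually_all_finite) (auto simp: filterlim_at_top)

lemma ev_h: assumes "r > 0" shows "eventually (\<lambda>n. \<forall>j. (b $ j - a $ j) / real (N n j) \<le> r) sequentially"
proof (intro eventually_all_finite)
  fix j
  have "filterlim (\<lambda>n. real (N n j)) at_top sequentially"
    using Ninf[of j] filterlim_real_sequentially filterlim_compose by blast
  then have "eventually (\<lambda>n. real (N n j) \<ge> (b $ j - a $ j) / r + 1) sequentially"
    unfolding filterlim_at_top by blast
  then show "eventually (\<lambda>n. (b $ j - a $ j) / real (N n j) \<le> r) sequentially"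
  proof eventually_elim
    case (elim n)
    have "(b $ j - a $ j) / r \<ge> 0" using ab[of j] assms by simp
    then have Np: "real (N n j) > 0" using elim by linarith
    have "b $ j - a $ j \<le> r * real (N n j)" using elim assms by (simp add: field_simps)
    then show ?case using Np by (simp add: field_simps)
  qed
qed

lemma ev_close: assumes "r > 0"
  shows "eventually (\<lambda>n. \<forall>i\<in>mindex (N n). infnorm (x n i - unif_point a b (N n) i) \<le> r) sequentially"
  using grid assms unfolding asympt_uniform_grid_def by blast

lemma cell_measure:
  assumes "\<forall>j. N n j \<ge> 1"
  shows "measure lebesgue (cell n i) = W n"
proof -
  have "measure lebesgue (cell n i) = (\<Prod>j\<in>UNIV. (b $ j - a $ j) / real (N n j))"
    unfolding cell_def using ab assms
    by (subst measure_lebesgue_cbox_cart) (auto simp: hv_def less_imp_le)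
  also have "\<dots> = W n" by (simp add: prod_dividef W_def vol_def)
  finally show ?thesis .
qed

lemma card_W:
  assumes "\<forall>j. N n j \<ge> 1"
  shows "real (card (mindex (N n))) * W n = vol"
proof -
  have p: "real (\<Prod>j\<in>UNIV. N n j) > 0" using assms by (simp add: prod_pos Suc_le_eq del: of_nat_prod)
  show ?thesis unfolding card_mindex W_def using p by (simp add: field_simps del: of_nat_prod)
qed

lemma W_pos: "W n \<ge> 0"
  unfolding W_def by (metis divide_nonneg_nonneg less_imp_le of_nat_0_le_iff vol_pos)

lemma open_lower:
  fixes U :: "(real^'d) set"
  assumes U: "open U" and \<epsilon>: "\<epsilon> > 0"
  shows "eventually (\<lambda>n. measure lebesgue (U \<inter> cbox a b) - \<epsilon>
            \<le> real (card {i\<in>mindex (N n). x n i \<in> U}) * W n) sequentially"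
proof -
  define V where "V k = cbox a b - (\<Union>z\<in>-U. ball z (1 / Suc k))" for k :: nat
  have Vs: "V k \<in> sets lebesgue" for k
    unfolding V_def by (intro closed_lebesgue closed_Diff) auto
  have Vinc: "incseq V"
  proof (rule incseq_SucI)
    fix k
    have "ball z (1 / real (Suc (Suc k))) \<subseteq> ball z (1 / Suc k)" for z
      by (intro subset_ball) (simp add: frac_le)
    then show "V k \<subseteq> V (Suc k)" unfolding V_def by blast
  qed
  have UV: "(\<Union>k. V k) = U \<inter> cbox a b"
  proof
    show "(\<Union>k. V k) \<subseteq> U \<inter> cbox a b"
    proof
      fix y assume "y \<in> (\<Union>k. V k)"
      then obtain k where "y \<in> V k" by blast
      moreover have "y \<in> ball y (1 / Suc k)" by simp
      ultimately show "y \<in> U \<inter> cbox a b" unfolding V_def by blast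
    qed
    show "U \<inter> cbox a b \<subseteq> (\<Union>k. V k)"
    proof
      fix y assume y: "y \<in> U \<inter> cbox a b"
      then obtain e where e: "e > 0" "ball y e \<subseteq> U" using U open_contains_ball by blast
      from reals_Archimedean[OF e(1)] obtain k :: nat where "inverse (real (Suc k)) < e" by blast
      then have k: "1 / real (Suc k) < e" by (simp add: inverse_eq_divide)
      have "y \<notin> ball z (1 / Suc k)" if z: "z \<in> -U" for z
      proof
        assume "y \<in> ball z (1 / Suc k)"
        then have "dist y z < e" using k by (simp add: dist_commute)
        then have "z \<in> U" using e(2) by auto
        then show False using z by simp
      qed
      then have "y \<in> V k"
        unfolding V_def using y by blast
      then show "y \<in> (\<Union>k. V k)" by blast
    qed
  qed
  have Us: "U \<inter> cbox a b \<in> sets lebesgue"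
    using open_lebesgue[OF U] closed_lebesgue[OF closed_cbox] by (rule sets.Int)
  have fin: "emeasure lebesgue (U \<inter> cbox a b) \<noteq> \<infinity>"
    using fmeasurableD2[OF fmeasurableI2[OF lmeasurable_cbox _ Us]] by auto
  have "(\<lambda>k. measure lebesgue (V k)) \<longlonglongrightarrow> measure lebesgue (U \<inter> cbox a b)"
    using Lim_measure_incseq[of V lebesgue] Vs Vinc fin UV by auto
  then have "eventually (\<lambda>k. measure lebesgue (V k) > measure lebesgue (U \<inter> cbox a b) - \<epsilon>) sequentially"
    using \<epsilon> by (intro order_tendstoD(1)) auto
  then obtain k0 where k0: "measure lebesgue (V k0) > measure lebesgue (U \<inter> cbox a b) - \<epsilon>"
    by (auto simp: eventually_sequentially)
  define r where "r = 1 / (4 * real CARD('d) * real (Suc k0))"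
  have r0: "r > 0" by (simp add: r_def)
  have cpos: "real CARD('d) > 0" by simp
  have rr: "c * (2 * (1 / (4 * c * s))) = 1 / (2 * s)" if "c > 0" "s > 0" for c s :: real
    using that by (simp add: field_simps)
  have "real CARD('d) * (2 * r) = 1 / (2 * real (Suc k0))"
    unfolding r_def by (rule rr[OF cpos]) simp
  also have "\<dots> < 1 / real (Suc k0)" by (intro divide_strict_left_mono) auto
  finally have rsmall: "real CARD('d) * (2 * r) < 1 / real (Suc k0)" .
  have "eventually (\<lambda>n. (\<forall>j. N n j \<ge> 1) \<and> (\<forall>j. (b $ j - a $ j) / real (N n j) \<le> r) \<and>
     (\<forall>i\<in>mindex (N n). infnorm (x n i - unif_point a b (N n) i) \<le> r)) sequentially"
    using ev_N1 ev_h[OF r0] ev_close[OF r0] by (intro eventually_conj)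
  then show ?thesis
  proof (rule eventually_mono)
    fix n assume "(\<forall>j. N n j \<ge> 1) \<and> (\<forall>j. (b $ j - a $ j) / real (N n j) \<le> r) \<and>
     (\<forall>i\<in>mindex (N n). infnorm (x n i - unif_point a b (N n) i) \<le> r)"
    then have elim: "\<forall>j. N n j \<ge> 1" "\<forall>j. (b $ j - a $ j) / real (N n j) \<le> r"
     "\<forall>i\<in>mindex (N n). infnorm (x n i - unif_point a b (N n) i) \<le> r" by auto
    define I where "I = {i\<in>mindex (N n). x n i \<in> U}"
    have finI: "finite I" using finite_mindex[of "N n"] by (simp add: I_def)
    have sub: "V k0 \<subseteq> (\<Union>i\<in>I. cell n i)"
    proof
      fix y assume yV: "y \<in> V k0"
      then have ybox: "y \<in> cbox a b" by (simp add: V_def)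
      obtain i where i: "i \<in> mindex (N n)" and
        co: "\<And>j. unif_point a b (N n) i $ j - (b $ j - a $ j) / real (N n j) \<le> y $ j
            \<and> y $ j \<le> unif_point a b (N n) i $ j"
        using grid_cover[OF ab _ ybox, of "N n"] elim(1) by blast
      have ycell: "y \<in> cell n i" using co by (simp add: cell_def mem_box_cart hv_def)
      have dj: "\<bar>(x n i - y) $ j\<bar> \<le> 2 * r" for j
      proof -
        have "\<bar>(x n i - unif_point a b (N n) i) $ j\<bar> \<le> r"
          using component_le_infnorm_cart[of "x n i - unif_point a b (N n) i" j] elim(3) i by force
        moreover have "(b $ j - a $ j) / real (N n j) \<le> r" using elim(2) by blast
        ultimately show ?thesis using co[of j] by (simp add: abs_le_iff)
      qed
      have "dist (x n i) y \<le> (\<Sum>j\<in>UNIV. \<bar>(x n i - y) $ j\<bar>)"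
        unfolding dist_norm by (rule norm_le_l1_cart)
      also have "\<dots> \<le> (\<Sum>j\<in>(UNIV::'d set). 2 * r)" by (intro sum_mono dj)
      also have "\<dots> < 1 / real (Suc k0)" using rsmall by simp
      finally have "y \<in> ball (x n i) (1 / Suc k0)" by simp
      then have "x n i \<in> U" using yV unfolding V_def by blast
      then show "y \<in> (\<Union>i\<in>I. cell n i)" using i ycell by (auto simp: I_def)
    qed
    have cells: "cell n i \<in> fmeasurable lebesgue" for i
      unfolding cell_def by (rule lmeasurable_cbox)
    have "measure lebesgue (V k0) \<le> measure lebesgue (\<Union>i\<in>I. cell n i)"
      using cells finI by (intro measure_mono_fmeasurable[OF sub Vs] fmeasurable.finite_UN) auto
    also have "\<dots> \<le> (\<Sum>i\<in>I. measure lebesgue (cell n i))"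
      using finI cells by (intro measure_UNION_le) auto
    also have "\<dots> = real (card I) * W n" using cell_measure[OF elim(1)] by simp
    finally show "measure lebesgue (U \<inter> cbox a b) - \<epsilon>
            \<le> real (card {i\<in>mindex (N n). x n i \<in> U}) * W n" using k0 by (simp add: I_def)
  qed
qed

lemma closed_upper:
  fixes C :: "(real^'d) set"
  assumes C: "closed C" and \<epsilon>: "\<epsilon> > 0"
  shows "eventually (\<lambda>n. real (card {i\<in>mindex (N n). x n i \<in> C}) * W n
            \<le> measure lebesgue (C \<inter> cbox a b) + \<epsilon>) sequentially"
proof -
  have oC: "open (-C)" using C by auto
  show ?thesis using open_lower[OF oC \<epsilon>] ev_N1
proof eventually_elim
  case (elim n)
  have fin: "finite (mindex (N n))" by (rule finite_mindex)
  have "{i\<in>mindex (N n). x n i \<in> C} = mindex (N n) - {i\<in>mindex (N n). x n i \<in> -C}" by auto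
  then have "card {i\<in>mindex (N n). x n i \<in> C} = card (mindex (N n)) - card {i\<in>mindex (N n). x n i \<in> -C}"
    using fin by (simp add: card_Diff_subset)
  moreover have "card {i\<in>mindex (N n). x n i \<in> -C} \<le> card (mindex (N n))"
    using fin by (intro card_mono) auto
  ultimately have cd: "real (card {i\<in>mindex (N n). x n i \<in> C}) * W n = vol - real (card {i\<in>mindex (N n). x n i \<in> -C}) * W n"
    using card_W[OF elim(2)] by (simp add: of_nat_diff left_diff_distrib)
  have "measure lebesgue (cbox a b) = measure lebesgue (C \<inter> cbox a b) + measure lebesgue (-C \<inter> cbox a b)"
  proof -
    have cu: "cbox a b = (C \<inter> cbox a b) \<union> (-C \<inter> cbox a b)" by blast
    have s1: "C \<inter> cbox a b \<in> sets lebesgue"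
      using closed_lebesgue[OF C] closed_lebesgue[OF closed_cbox] by (rule sets.Int)
    have s2: "-C \<inter> cbox a b \<in> sets lebesgue"
      using open_lebesgue[OF oC] closed_lebesgue[OF closed_cbox] by (rule sets.Int)
    have "C \<inter> cbox a b \<in> fmeasurable lebesgue" "-C \<inter> cbox a b \<in> fmeasurable lebesgue"
      using s1 s2 by (auto intro: fmeasurableI2[OF lmeasurable_cbox])
    then have "measure lebesgue ((C \<inter> cbox a b) \<union> (-C \<inter> cbox a b)) =
        measure lebesgue (C \<inter> cbox a b) + measure lebesgue ((-C \<inter> cbox a b) - (C \<inter> cbox a b))"
      by (intro measure_Un2)
    moreover have "(-C \<inter> cbox a b) - (C \<inter> cbox a b) = -C \<inter> cbox a b" by blast
    ultimately show ?thesis using cu by simp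
  qed
  then show ?case using cd elim(1) measure_box by simp
qed
qed

end

lemma length_filter_samples:
  assumes "finite I"
  shows "length (filter P (sorted_list_of_multiset (image_mset g (mset_set I)))) = card {i\<in>I. P (g i)}"
proof -
  have "length (filter P (sorted_list_of_multiset (image_mset g (mset_set I))))
      = size (mset (filter P (sorted_list_of_multiset (image_mset g (mset_set I)))))" by (simp only: size_mset)
  also have "\<dots> = size (filter_mset P (image_mset g (mset_set I)))" by (simp only: mset_filter mset_sorted_list_of_multiset)
  also have "\<dots> = size (image_mset g (filter_mset (\<lambda>i. P (g i)) (mset_set I)))"
    by (simp add: filter_mset_image_mset)
  also have "\<dots> = card {i\<in>I. P (g i)}" using assms by (simp add: filter_mset_mset_set)
  finally show ?thesis .
qed

lemma length_samples:
  assumes "finite I"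
  shows "length (sorted_list_of_multiset (image_mset g (mset_set I))) = card I"
  using length_filter_samples[OF assms, of "\<lambda>_. True" g] by simp

lemma set_samples:
  assumes "finite I"
  shows "set (sorted_list_of_multiset (image_mset g (mset_set I))) = g ` I"
  using assms by simp

locale setting = gridset a b N x for a b :: "real^'d" and N x +
  fixes \<Omega> :: "(real^'d) set" and f :: "real^'d \<Rightarrow> real"
  assumes reg: "regular_set \<Omega>" and pos: "emeasure lebesgue \<Omega> > 0"
    and cont: "cont_ae_on \<Omega> f" and rect: "\<Omega> \<subseteq> cbox a b"
begin

definition "m = measure lebesgue \<Omega>"
definition "A u = {x\<in>\<Omega>. f x \<le> u}"
definition "B u = {x\<in>\<Omega>. f x < u}"
definition "D = {x\<in>\<Omega>. \<not> continuous (at x within \<Omega>) f}"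
definition "I n = {i\<in>mindex (N n). x n i \<in> \<Omega>}"
definition "c n = card (I n)"

lemma D_null: "D \<in> null_sets lebesgue"
proof -
  have "AE y in lebesgue. y \<in> \<Omega> \<longrightarrow> continuous (at y within \<Omega>) f"
    using cont by (simp add: cont_ae_on_def)
  then have "{y \<in> space lebesgue. \<not> (y \<in> \<Omega> \<longrightarrow> continuous (at y within \<Omega>) f)} \<in> null_sets lebesgue"
    by (simp add: completion.AE_iff_null_sets)
  moreover have "{y \<in> space lebesgue. \<not> (y \<in> \<Omega> \<longrightarrow> continuous (at y within \<Omega>) f)} = D"
    by (auto simp: D_def)
  ultimately show ?thesis by simp
qed

lemma Fr_null: "frontier \<Omega> \<in> null_sets lebesgue"
  using reg by (simp add: regular_set_def)

lemma bdd: "bounded \<Omega>"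
  using reg by (simp add: regular_set_def)

lemma null_sub: "S \<subseteq> frontier \<Omega> \<union> D \<Longrightarrow> S \<in> null_sets lebesgue"
  using Fr_null D_null by (meson completion.complete2 null_sets.Un)

lemma Om_sets: "\<Omega> \<in> sets lebesgue"
proof -
  have "\<Omega> - interior \<Omega> \<subseteq> frontier \<Omega> \<union> D"
    using closure_subset[of \<Omega>] by (auto simp: frontier_def)
  then have "\<Omega> - interior \<Omega> \<in> sets lebesgue" using null_sub by blast
  moreover have "interior \<Omega> \<in> sets lebesgue" by (intro open_lebesgue) auto
  moreover have "\<Omega> = interior \<Omega> \<union> (\<Omega> - interior \<Omega>)" using interior_subset by blast
  ultimately show ?thesis by (metis sets.Un)
qed

lemma Om_fm: "\<Omega> \<in> fmeasurable lebesgue"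
  using bdd Om_sets by (rule bounded_set_imp_lmeasurable)

lemma m_pos: "m > 0"
  using pos emeasure_eq_measure2[OF Om_fm] by (simp add: m_def)

lemma m_int: "measure lebesgue (interior \<Omega>) = m"
proof -
  have "\<Omega> - interior \<Omega> \<subseteq> frontier \<Omega> \<union> D"
    using closure_subset[of \<Omega>] by (auto simp: frontier_def)
  then have "\<Omega> - interior \<Omega> \<in> null_sets lebesgue" using null_sub by blast
  moreover have "interior \<Omega> = \<Omega> - (\<Omega> - interior \<Omega>)" using interior_subset by blast
  ultimately show ?thesis using Om_sets by (metis measure_Diff_null_set m_def)
qed

lemma m_cl: "measure lebesgue (closure \<Omega>) = m"
proof -
  have "closure \<Omega> - \<Omega> \<subseteq> frontier \<Omega> \<union> D"
    using interior_subset[of \<Omega>] by (auto simp: frontier_def)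
  then have "closure \<Omega> - \<Omega> \<in> null_sets lebesgue" using null_sub by blast
  moreover have "closure \<Omega> = \<Omega> \<union> (closure \<Omega> - \<Omega>)" using closure_subset by blast
  ultimately show ?thesis using Om_sets by (metis measure_Un_null_set m_def)
qed

lemma clA_sub: "closure (A u) \<subseteq> A u \<union> (frontier \<Omega> \<union> D)"
proof
  fix y assume y: "y \<in> closure (A u)"
  have AO: "A u \<subseteq> \<Omega>" by (auto simp: A_def)
  show "y \<in> A u \<union> (frontier \<Omega> \<union> D)"
  proof (cases "y \<in> \<Omega>")
    case False
    have "y \<in> closure \<Omega>" using closure_mono[OF AO] y by blast
    moreover have "y \<notin> interior \<Omega>" using False interior_subset by blast
    ultimately show ?thesis by (simp add: frontier_def)
  next
    case yO: True
    show ?thesis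
    proof (cases "y \<in> D")
      case True then show ?thesis by simp
    next
      case False
      then have cy: "continuous (at y within \<Omega>) f" using yO by (simp add: D_def)
      have "f y \<le> u"
      proof (rule ccontr)
        assume "\<not> f y \<le> u"
        then have e: "f y - u > 0" by simp
        obtain d where d: "d > 0" "\<And>x'. x' \<in> \<Omega> \<Longrightarrow> dist x' y < d \<Longrightarrow> dist (f x') (f y) < f y - u"
          using cy e unfolding continuous_within_eps_delta by metis
        obtain z where z: "z \<in> A u" "dist z y < d" using y d(1) unfolding closure_approachable by blast
        have "dist (f z) (f y) < f y - u" using d(2)[of z] z AO by blast
        moreover have "f z \<le> u" using z by (simp add: A_def)
        ultimately show False by (simp add: dist_real_def abs_less_iff)
      qed
      then show ?thesis using yO by (simp add: A_def)
    qed
  qed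
qed

lemma A_sets: "A u \<in> sets lebesgue"
proof -
  have AO: "A u \<subseteq> \<Omega>" by (auto simp: A_def)
  have "(closure (A u) \<inter> \<Omega>) - A u \<subseteq> frontier \<Omega> \<union> D" using clA_sub by blast
  then have n: "(closure (A u) \<inter> \<Omega>) - A u \<in> null_sets lebesgue" using null_sub by blast
  have s: "closure (A u) \<inter> \<Omega> \<in> sets lebesgue"
    using closed_lebesgue[of "closure (A u)"] Om_sets by (intro sets.Int) auto
  have "A u = (closure (A u) \<inter> \<Omega>) - ((closure (A u) \<inter> \<Omega>) - A u)"
    using AO closure_subset[of "A u"] by blast
  then show ?thesis using s n by (metis null_setsD2 sets.Diff)
qed

lemma A_fm: "A u \<in> fmeasurable lebesgue"
  using A_sets by (intro fmeasurableI2[OF Om_fm]) (auto simp: A_def)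

lemma meas_clA: "measure lebesgue (closure (A u) \<inter> cbox a b) \<le> measure lebesgue (A u)"
proof -
  have n: "frontier \<Omega> \<union> D \<in> null_sets lebesgue" using null_sub by blast
  have "bounded (A u \<union> (frontier \<Omega> \<union> D))"
    using bdd bounded_closure[OF bdd] by (auto simp: A_def D_def frontier_def intro: bounded_subset)
  then have fm: "A u \<union> (frontier \<Omega> \<union> D) \<in> fmeasurable lebesgue"
    using A_sets n by (intro bounded_set_imp_lmeasurable) auto
  have "measure lebesgue (closure (A u) \<inter> cbox a b) \<le> measure lebesgue (A u \<union> (frontier \<Omega> \<union> D))"
    using clA_sub by (intro measure_mono_fmeasurable[OF _ _ fm]) (auto intro: sets.Int closed_lebesgue)
  also have "\<dots> = measure lebesgue (A u)" using A_sets n by (rule measure_Un_null_set)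
  finally show ?thesis .
qed

lemma intB_sup: "B u - (frontier \<Omega> \<union> D) \<subseteq> interior (B u)"
proof
  fix y assume y: "y \<in> B u - (frontier \<Omega> \<union> D)"
  then have yO: "y \<in> \<Omega>" and fy: "f y < u" by (auto simp: B_def)
  have yi: "y \<in> interior \<Omega>" using y closure_subset[of \<Omega>] by (auto simp: frontier_def B_def)
  then obtain e2 where e2: "e2 > 0" "ball y e2 \<subseteq> \<Omega>" by (auto simp: mem_interior)
  have cy: "continuous (at y within \<Omega>) f" using y yO by (auto simp: D_def)
  obtain d where d: "d > 0" "\<And>x'. x' \<in> \<Omega> \<Longrightarrow> dist x' y < d \<Longrightarrow> dist (f x') (f y) < u - f y"
    using cy fy unfolding continuous_within_eps_delta by (metis diff_gt_0_iff_gt)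
  have "ball y (min d e2) \<subseteq> B u"
  proof
    fix z assume z: "z \<in> ball y (min d e2)"
    then have zO: "z \<in> \<Omega>" using e2 by (auto simp: dist_commute)
    have "dist z y < d" using z by (simp add: dist_commute)
    then have "dist (f z) (f y) < u - f y" using d(2) zO by blast
    then have "f z < u" by (simp add: dist_real_def abs_less_iff)
    then show "z \<in> B u" using zO by (simp add: B_def)
  qed
  then show "y \<in> interior (B u)" using d(1) e2(1) by (auto simp: mem_interior intro!: exI[of _ "min d e2"])
qed

lemma B_sets: "B u \<in> sets lebesgue"
  and meas_intB: "measure lebesgue (interior (B u) \<inter> cbox a b) = measure lebesgue (B u)"
proof -
  have n: "B u - interior (B u) \<in> null_sets lebesgue" using intB_sup null_sub by blast
  have eq: "B u = interior (B u) \<union> (B u - interior (B u))" using interior_subset by blast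
  have si: "interior (B u) \<in> sets lebesgue" by (intro open_lebesgue) auto
  show "B u \<in> sets lebesgue" using si n eq by (metis null_setsD2 sets.Un)
  have "interior (B u) \<inter> cbox a b = interior (B u)"
    using interior_subset[of "B u"] rect by (auto simp: B_def)
  then show "measure lebesgue (interior (B u) \<inter> cbox a b) = measure lebesgue (B u)"
    using measure_Un_null_set[OF si n] eq by simp
qed

lemma B_fm: "B u \<in> fmeasurable lebesgue"
  using B_sets by (intro fmeasurableI2[OF Om_fm]) (auto simp: B_def)

end

context setting begin

lemma W_gt0: "\<forall>j. N n j \<ge> 1 \<Longrightarrow> W n > 0"
proof -
  assume "\<forall>j. N n j \<ge> 1"
  then have "real (\<Prod>j\<in>UNIV. N n j) > 0" by (simp add: prod_pos Suc_le_eq del: of_nat_prod)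
  then show "W n > 0" using vol_pos unfolding W_def by (intro divide_pos_pos) auto
qed

lemma finI: "finite (I n)"
  using finite_mindex[of "N n"] by (simp add: I_def)

lemma setA: "{i\<in>mindex (N n). x n i \<in> A u} = {i\<in>I n. f (x n i) \<le> u}"
  by (auto simp: A_def I_def)

lemma setB: "{i\<in>mindex (N n). x n i \<in> B u} = {i\<in>I n. f (x n i) < u}"
  by (auto simp: B_def I_def)

lemma card_mono_W:
  assumes "S \<subseteq> T" "T \<subseteq> mindex (N n)"
  shows "real (card S) * W n \<le> real (card T) * W n"
proof -
  have "finite T" using assms(2) finite_mindex finite_subset by blast
  then have "card S \<le> card T" using assms(1) by (rule card_mono)
  then show ?thesis using W_pos by (intro mult_right_mono) auto
qed

lemma ev_c_lower: assumes "\<epsilon> > 0" shows "eventually (\<lambda>n. m - \<epsilon> \<le> real (c n) * W n) sequentially"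
  using open_lower[of "interior \<Omega>" \<epsilon>] assms
proof -
  have "interior \<Omega> \<inter> cbox a b = interior \<Omega>" using interior_subset[of \<Omega>] rect by blast
  then have "eventually (\<lambda>n. m - \<epsilon> \<le> real (card {i\<in>mindex (N n). x n i \<in> interior \<Omega>}) * W n) sequentially"
    using open_lower[of "interior \<Omega>" \<epsilon>] assms m_int by simp
  then show ?thesis
  proof (rule eventually_mono)
    fix n assume h: "m - \<epsilon> \<le> real (card {i\<in>mindex (N n). x n i \<in> interior \<Omega>}) * W n"
    have "real (card {i\<in>mindex (N n). x n i \<in> interior \<Omega>}) * W n \<le> real (c n) * W n"
      unfolding c_def I_def using interior_subset[of \<Omega>] by (intro card_mono_W) auto
    then show "m - \<epsilon> \<le> real (c n) * W n" using h by linarith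
  qed
qed

lemma ev_c_upper: assumes "\<epsilon> > 0" shows "eventually (\<lambda>n. real (c n) * W n \<le> m + \<epsilon>) sequentially"
proof -
  have "closure \<Omega> \<subseteq> cbox a b" using rect by (intro closure_minimal) auto
  then have "closure \<Omega> \<inter> cbox a b = closure \<Omega>" by blast
  then have "eventually (\<lambda>n. real (card {i\<in>mindex (N n). x n i \<in> closure \<Omega>}) * W n \<le> m + \<epsilon>) sequentially"
    using closed_upper[of "closure \<Omega>" \<epsilon>] assms m_cl by simp
  then show ?thesis
  proof (rule eventually_mono)
    fix n assume h: "real (card {i\<in>mindex (N n). x n i \<in> closure \<Omega>}) * W n \<le> m + \<epsilon>"
    have "real (c n) * W n \<le> real (card {i\<in>mindex (N n). x n i \<in> closure \<Omega>}) * W n"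
      unfolding c_def I_def using closure_subset[of \<Omega>] by (intro card_mono_W) auto
    then show "real (c n) * W n \<le> m + \<epsilon>" using h by linarith
  qed
qed

lemma ev_le: assumes "\<epsilon> > 0"
  shows "eventually (\<lambda>n. real (card {i\<in>I n. f (x n i) \<le> u}) * W n \<le> measure lebesgue (A u) + \<epsilon>) sequentially"
  using closed_upper[of "closure (A u)" \<epsilon>] assms
proof -
  have "eventually (\<lambda>n. real (card {i\<in>mindex (N n). x n i \<in> closure (A u)}) * W n
      \<le> measure lebesgue (closure (A u) \<inter> cbox a b) + \<epsilon>) sequentially"
    using closed_upper[of "closure (A u)" \<epsilon>] assms by simp
  then show ?thesis
  proof (rule eventually_mono)
    fix n assume h: "real (card {i\<in>mindex (N n). x n i \<in> closure (A u)}) * W n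
      \<le> measure lebesgue (closure (A u) \<inter> cbox a b) + \<epsilon>"
    have "real (card {i\<in>mindex (N n). x n i \<in> A u}) * W n \<le> real (card {i\<in>mindex (N n). x n i \<in> closure (A u)}) * W n"
      using closure_subset[of "A u"] by (intro card_mono_W) auto
    then show "real (card {i\<in>I n. f (x n i) \<le> u}) * W n \<le> measure lebesgue (A u) + \<epsilon>"
      using h meas_clA[of u] setA by simp
  qed
qed

lemma ev_lt: assumes "\<epsilon> > 0"
  shows "eventually (\<lambda>n. measure lebesgue (B u) - \<epsilon> \<le> real (card {i\<in>I n. f (x n i) < u}) * W n) sequentially"
proof -
  have "eventually (\<lambda>n. measure lebesgue (interior (B u) \<inter> cbox a b) - \<epsilon>
       \<le> real (card {i\<in>mindex (N n). x n i \<in> interior (B u)}) * W n) sequentially"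
    using open_lower[of "interior (B u)" \<epsilon>] assms by simp
  then show ?thesis
  proof (rule eventually_mono)
    fix n assume h: "measure lebesgue (interior (B u) \<inter> cbox a b) - \<epsilon>
       \<le> real (card {i\<in>mindex (N n). x n i \<in> interior (B u)}) * W n"
    have "real (card {i\<in>mindex (N n). x n i \<in> interior (B u)}) * W n \<le> real (card {i\<in>mindex (N n). x n i \<in> B u}) * W n"
      using interior_subset[of "B u"] by (intro card_mono_W) auto
    then show "measure lebesgue (B u) - \<epsilon> \<le> real (card {i\<in>I n. f (x n i) < u}) * W n"
      using h meas_intB[of u] setB by simp
  qed
qed

lemma measA_le: "measure lebesgue (A u) \<le> m"
  unfolding m_def by (intro measure_mono_fmeasurable[OF _ A_sets Om_fm]) (auto simp: A_def)

lemma measB_le: "measure lebesgue (B u) \<le> m"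
  unfolding m_def by (intro measure_mono_fmeasurable[OF _ B_sets Om_fm]) (auto simp: B_def)

lemma ev_le_ratio: assumes \<delta>: "\<delta> > 0"
  shows "eventually (\<lambda>n. real (card {i\<in>I n. f (x n i) \<le> u}) \<le> (measure lebesgue (A u) / m + \<delta>) * real (c n)) sequentially"
proof -
  define \<epsilon> where "\<epsilon> = \<delta> * m / (2 + \<delta>)"
  have \<epsilon>0: "\<epsilon> > 0" using \<delta> m_pos by (simp add: \<epsilon>_def)
  have "\<epsilon> * (2 + \<delta>) = \<delta> * m" using \<delta> by (simp add: \<epsilon>_def)
  then have e1: "\<delta> * m = 2 * \<epsilon> + \<delta> * \<epsilon>" by (simp add: algebra_simps)
  define q where "q = measure lebesgue (A u) / m"
  have q01: "0 \<le> q" "q \<le> 1" using measA_le m_pos by (auto simp: q_def)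
  have qm: "measure lebesgue (A u) = q * m" using m_pos by (simp add: q_def)
  show ?thesis using ev_le[OF \<epsilon>0, of u] ev_c_lower[OF \<epsilon>0] ev_N1
  proof (eventually_elim)
    case (elim n)
    have W: "W n > 0" using W_gt0 elim(3) by blast
    have "(q + \<delta>) * (m - \<epsilon>) = q * m - q * \<epsilon> + \<delta> * m - \<delta> * \<epsilon>" by (simp add: algebra_simps)
    moreover have "q * \<epsilon> \<le> \<epsilon>" using q01 \<epsilon>0 by (simp add: mult_left_le_one_le)
    ultimately have "q * m + \<epsilon> \<le> (q + \<delta>) * (m - \<epsilon>)" using e1 by linarith
    also have "\<dots> \<le> (q + \<delta>) * (real (c n) * W n)" using elim(2) q01 \<delta> by (intro mult_left_mono) auto
    finally have "real (card {i\<in>I n. f (x n i) \<le> u}) * W n \<le> ((q + \<delta>) * real (c n)) * W n"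
      using elim(1) qm by (simp add: algebra_simps)
    then show ?case using W by (simp add: q_def)
  qed
qed

lemma ev_lt_ratio: assumes \<delta>: "\<delta> > 0"
  shows "eventually (\<lambda>n. real (card {i\<in>I n. f (x n i) < u}) \<ge> (measure lebesgue (B u) / m - \<delta>) * real (c n)) sequentially"
proof -
  define \<epsilon> where "\<epsilon> = \<delta> * m / (2 + \<delta>)"
  have \<epsilon>0: "\<epsilon> > 0" using \<delta> m_pos by (simp add: \<epsilon>_def)
  have "\<epsilon> * (2 + \<delta>) = \<delta> * m" using \<delta> by (simp add: \<epsilon>_def)
  then have e1: "\<delta> * m = 2 * \<epsilon> + \<delta> * \<epsilon>" by (simp add: algebra_simps)
  define q where "q = measure lebesgue (B u) / m"
  have q01: "0 \<le> q" "q \<le> 1" using measB_le m_pos by (auto simp: q_def)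
  have qm: "measure lebesgue (B u) = q * m" using m_pos by (simp add: q_def)
  show ?thesis using ev_lt[OF \<epsilon>0, of u] ev_c_upper[OF \<epsilon>0] ev_N1
  proof (eventually_elim)
    case (elim n)
    have W: "W n > 0" using W_gt0 elim(3) by blast
    show ?case
    proof (cases "q - \<delta> \<le> 0")
      case True
      then have "(q - \<delta>) * real (c n) \<le> 0" by (simp add: mult_nonpos_nonneg)
      then show ?thesis by (simp add: q_def)
    next
      case False
      have "((q - \<delta>) * real (c n)) * W n = (q - \<delta>) * (real (c n) * W n)" by simp
      also have "\<dots> \<le> (q - \<delta>) * (m + \<epsilon>)" using elim(2) False by (intro mult_left_mono) auto
      also have "\<dots> = q * m + q * \<epsilon> - \<delta> * m - \<delta> * \<epsilon>" by (simp add: algebra_simps)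
      also have "\<dots> \<le> q * m - \<epsilon>"
      proof -
        have "q * \<epsilon> \<le> \<epsilon>" using q01 \<epsilon>0 by (simp add: mult_left_le_one_le)
        moreover have "\<delta> * \<epsilon> \<ge> 0" using \<delta> \<epsilon>0 by simp
        ultimately show ?thesis using e1 by linarith
      qed
      also have "\<dots> \<le> real (card {i\<in>I n. f (x n i) < u}) * W n" using elim(1) qm by simp
      finally show ?thesis using W by (simp add: q_def)
    qed
  qed
qed

lemma ev_W_small: assumes "t > 0" shows "eventually (\<lambda>n. W n \<le> t) sequentially"
proof -
  obtain j0 :: 'd where True by simp
  have "filterlim (\<lambda>n. real (N n j0)) at_top sequentially"
    using Ninf[of j0] filterlim_real_sequentially filterlim_compose by blast
  then have "eventually (\<lambda>n. real (N n j0) \<ge> vol / t) sequentially"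
    unfolding filterlim_at_top by blast
  then show ?thesis using ev_N1
  proof eventually_elim
    case (elim n)
    have p: "(\<Prod>j\<in>UNIV. N n j) > 0" using elim(2) by (simp add: prod_pos Suc_le_eq)
    have "N n j0 \<le> (\<Prod>j\<in>UNIV. N n j)"
      using p by (intro dvd_imp_le dvd_prodI) auto
    then have "real (N n j0) \<le> real (\<Prod>j\<in>UNIV. N n j)" by (simp only: of_nat_le_iff)
    then have "vol / t \<le> real (\<Prod>j\<in>UNIV. N n j)" using elim(1) by linarith
    then have "vol \<le> t * real (\<Prod>j\<in>UNIV. N n j)" using assms by (simp add: field_simps)
    then show ?case using p assms unfolding W_def by (simp add: field_simps del: of_nat_prod)
  qed
qed

lemma c_inf: "filterlim c at_top sequentially"
  unfolding filterlim_at_top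
proof
  fix Z :: nat
  define t where "t = m / (2 * (real Z + 1))"
  have t0: "t > 0" using m_pos by (simp add: t_def)
  have m2: "m / 2 > 0" using m_pos by simp
  show "eventually (\<lambda>n. Z \<le> c n) sequentially"
    using ev_c_lower[OF m2] ev_W_small[OF t0] ev_N1
  proof eventually_elim
    case (elim n)
    have W: "W n > 0" using W_gt0 elim(3) by blast
    have "2 * real Z + 2 \<noteq> 0" "real Z + 1 \<noteq> 0" by (simp_all add: add_nonneg_eq_0_iff)
    then have "m / 2 = t * (real Z + 1)" by (simp add: t_def field_simps)
    also have "\<dots> \<ge> W n * (real Z + 1)" using elim(2) by (intro mult_right_mono) auto
    finally have "W n * (real Z + 1) \<le> W n * real (c n)" using elim(1) by (simp add: mult.commute)
    then have "real Z + 1 \<le> real (c n)" using W by simp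
    then show ?case by simp
  qed
qed

end

context setting begin

definition "F u = measure lebesgue (A u) / m"
definition "ER = ess_range \<Omega> f"
abbreviation "g \<equiv> mono_rearr \<Omega> f"

lemma g_eq: "y \<noteq> 0 \<Longrightarrow> y \<noteq> 1 \<Longrightarrow> g y = Inf {u. y \<le> F u}"
  by (simp add: mono_rearr_def F_def A_def m_def)

lemma F_mono: "u \<le> v \<Longrightarrow> F u \<le> F v"
proof -
  assume "u \<le> v"
  then have "measure lebesgue (A u) \<le> measure lebesgue (A v)"
    by (intro measure_mono_fmeasurable[OF _ A_sets A_fm]) (auto simp: A_def)
  then show ?thesis using m_pos by (simp add: F_def divide_right_mono)
qed

lemma F_ge0: "F u \<ge> 0" using m_pos by (simp add: F_def)

lemma F_top: assumes "y < 1" shows "\<exists>u. y \<le> F u"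
proof -
  have inc: "incseq (\<lambda>n::nat. A (real n))" by (auto simp: incseq_def A_def)
  have un: "(\<Union>n. A (real n)) = \<Omega>"
  proof -
    have "\<exists>n::nat. f z \<le> real n" for z using real_arch_simple by blast
    then show ?thesis by (auto simp: A_def)
  qed
  have "(\<lambda>n. measure lebesgue (A (real n))) \<longlonglongrightarrow> measure lebesgue (\<Union>n. A (real n))"
  proof (intro Lim_measure_incseq)
    show "range (\<lambda>n. A (real n)) \<subseteq> sets lebesgue" using A_sets by auto
    show "incseq (\<lambda>n. A (real n))" by (rule inc)
    show "emeasure lebesgue (\<Union>n. A (real n)) \<noteq> \<infinity>" using fmeasurableD2[OF Om_fm] un by simp
  qed
  then have "(\<lambda>n. measure lebesgue (A (real n))) \<longlonglongrightarrow> m" using un by (simp add: m_def)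
  moreover have "y * m < m" using assms m_pos by simp
  ultimately have "eventually (\<lambda>n. y * m < measure lebesgue (A (real n))) sequentially"
    by (rule order_tendstoD(1))
  then obtain n where "y * m < measure lebesgue (A (real n))" by (auto simp: eventually_sequentially)
  then have "y \<le> F (real n)" using m_pos by (simp add: F_def field_simps)
  then show ?thesis by blast
qed

lemma F_bot: assumes "y > 0" shows "\<exists>u. F u < y"
proof -
  have dec: "antimono_on UNIV (\<lambda>n::nat. A (- real n))" by (auto simp: monotone_on_def A_def)
  have int: "(\<Inter>n. A (- real n)) = {}"
  proof -
    have arch: "\<exists>n::nat. - real n < f z" for z
    proof -
      obtain n :: nat where "- f z < real n" using reals_Archimedean2 by blast
      then show ?thesis by (intro exI[of _ n]) linarith
    qed
    then show ?thesis
    proof (intro equals0I)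
      fix z assume z: "z \<in> (\<Inter>n. A (- real n))"
      obtain n :: nat where "- real n < f z" using arch[of z] by blast
      moreover have "f z \<le> - real n" using z by (auto simp: A_def)
      ultimately show False by simp
    qed
  qed
  have fin: "emeasure lebesgue (A (- real n)) \<noteq> \<infinity>" for n using fmeasurableD2[OF A_fm, of "- real n"] by simp
  have "(\<lambda>n. measure lebesgue (A (- real n))) \<longlonglongrightarrow> measure lebesgue (\<Inter>n. A (- real n))"
    by (rule Lim_measure_decseq[OF _ dec fin]) (use A_sets in blast)
  then have "(\<lambda>n. measure lebesgue (A (- real n))) \<longlonglongrightarrow> 0" using int by simp
  moreover have "y * m > 0" using assms m_pos by simp
  ultimately have "eventually (\<lambda>n. measure lebesgue (A (- real n)) < y * m) sequentially"
    by (rule order_tendstoD(2))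
  then obtain n where "measure lebesgue (A (- real n)) < y * m" by (auto simp: eventually_sequentially)
  then have "F (- real n) < y" using m_pos by (simp add: F_def field_simps)
  then show ?thesis by blast
qed

lemma S_ne: "y < 1 \<Longrightarrow> {u. y \<le> F u} \<noteq> {}"
  using F_top by blast

lemma S_bdd: assumes "y > 0" shows "bdd_below {u. y \<le> F u}"
proof -
  obtain u0 where u0: "F u0 < y" using F_bot[OF assms] by blast
  have "u0 \<le> u" if "y \<le> F u" for u
  proof (rule ccontr)
    assume "\<not> u0 \<le> u"
    then have "F u \<le> F u0" by (intro F_mono) simp
    then show False using u0 that by simp
  qed
  then show ?thesis unfolding bdd_below_def by blast
qed

lemma g_le: "0 < y \<Longrightarrow> y < 1 \<Longrightarrow> y \<le> F u \<Longrightarrow> g y \<le> u"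
  using S_bdd[of y] by (simp add: g_eq cInf_lower)

lemma g_lt_imp: "0 < y \<Longrightarrow> y < 1 \<Longrightarrow> v < g y \<Longrightarrow> F v < y"
  using g_le[of y v] by force

lemma g_gt: assumes "0 < y" "y < 1" "g y < u" shows "y \<le> F u"
proof -
  have "Inf {u. y \<le> F u} < u" using assms by (simp add: g_eq)
  then obtain u' where "y \<le> F u'" "u' < u"
    using cInf_less_iff[OF S_ne[OF assms(2)] S_bdd[OF assms(1)]] by blast
  then show ?thesis using F_mono[of u' u] by simp
qed

lemma g_mono: assumes "0 < y" "y \<le> y'" "y' < 1" shows "g y \<le> g y'"
proof (rule ccontr)
  assume "\<not> g y \<le> g y'"
  define v where "v = (g y + g y') / 2"
  have "g y' < v" "v < g y" using \<open>\<not> g y \<le> g y'\<close> by (auto simp: v_def)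
  then have "y' \<le> F v" "F v < y" using assms g_gt[of y' v] g_lt_imp[of y v] by auto
  then show False using assms by simp
qed

lemma g_left: assumes "0 < y" "y < 1" "\<epsilon> > 0" shows "\<exists>y'. 0 < y' \<and> y' < y \<and> g y' > g y - \<epsilon>"
proof (rule ccontr)
  assume H: "\<not> (\<exists>y'. 0 < y' \<and> y' < y \<and> g y' > g y - \<epsilon>)"
  define v where "v = g y - \<epsilon> / 2"
  have Fv: "F v < y" using assms by (intro g_lt_imp) (auto simp: v_def)
  define y' where "y' = (F v + y) / 2"
  have y': "0 < y'" "y' < y" "F v < y'" using Fv F_ge0[of v] assms by (auto simp: y'_def)
  then have "g y' \<le> g y - \<epsilon>" using H by auto
  then have "g y' < v" using assms by (simp add: v_def)
  then have "y' \<le> F v" using y' assms by (intro g_gt) auto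
  then show False using y' by simp
qed

end

context setting begin

lemma measA_F: "measure lebesgue (A u) = F u * m"
  using m_pos by (simp add: F_def)

lemma Z_sets: "{x\<in>\<Omega>. p < f x \<and> f x < q} \<in> sets lebesgue"
proof -
  have "{x\<in>\<Omega>. p < f x \<and> f x < q} = B q - A p" by (auto simp: A_def B_def)
  then show ?thesis using B_sets A_sets by (metis sets.Diff)
qed

lemma ER_null:
  assumes S: "S \<in> sets lebesgue" "S \<subseteq> \<Omega>" "\<forall>y\<in>S. f y \<notin> ER"
  shows "S \<in> null_sets lebesgue"
proof -
  define Z where "Z pq = {x\<in>\<Omega>. fst pq < f x \<and> f x < snd pq}" for pq :: "real \<times> real"
  define R where "R = {pq \<in> \<rat> \<times> \<rat>. Z pq \<in> null_sets lebesgue}"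
  have cR: "countable R"
    by (rule countable_subset[of R "\<rat> \<times> \<rat>"]) (auto simp: R_def countable_rat)
  have nU: "(\<Union>pq\<in>R. Z pq) \<in> null_sets lebesgue"
    using cR by (intro null_sets_UN') (auto simp: R_def)
  have "S \<subseteq> (\<Union>pq\<in>R. Z pq)"
  proof
    fix y assume yS: "y \<in> S"
    define z where "z = f y"
    have "z \<notin> ER" using S(3) yS by (simp add: z_def)
    then obtain e where e: "e > 0" "\<not> emeasure lebesgue {x\<in>\<Omega>. \<bar>f x - z\<bar> < e} > 0"
      by (auto simp: ER_def ess_range_def)
    then have e0: "emeasure lebesgue {x\<in>\<Omega>. \<bar>f x - z\<bar> < e} = 0" by (simp add: not_gr_zero)
    obtain p where p: "p \<in> \<rat>" "z - e < p" "p < z" using Rats_dense_in_real[of "z - e" z] e by auto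
    obtain q where q: "q \<in> \<rat>" "z < q" "q < z + e" using Rats_dense_in_real[of z "z + e"] e by auto
    have sub: "Z (p, q) \<subseteq> {x\<in>\<Omega>. \<bar>f x - z\<bar> < e}" using p q by (auto simp: Z_def abs_less_iff)
    have ms: "{x\<in>\<Omega>. \<bar>f x - z\<bar> < e} \<in> sets lebesgue"
    proof -
      have "{x\<in>\<Omega>. \<bar>f x - z\<bar> < e} = {x\<in>\<Omega>. z - e < f x \<and> f x < z + e}" by (auto simp: abs_less_iff)
      then show ?thesis using Z_sets by simp
    qed
    have "emeasure lebesgue (Z (p, q)) \<le> 0" using emeasure_mono[OF sub ms] e0 by simp
    moreover have "Z (p, q) \<in> sets lebesgue" using Z_sets by (simp add: Z_def)
    ultimately have "Z (p, q) \<in> null_sets lebesgue" by (simp add: null_sets_def)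
    then have "(p, q) \<in> R" using p q by (simp add: R_def)
    moreover have "y \<in> Z (p, q)" using yS S(2) p q by (auto simp: Z_def z_def)
    ultimately show "y \<in> (\<Union>pq\<in>R. Z pq)" by blast
  qed
  then show ?thesis using nU S(1) by (meson null_sets_subset)
qed

lemma ER_exists:
  assumes "S \<in> sets lebesgue" "S \<subseteq> \<Omega>" "measure lebesgue S > 0"
  shows "\<exists>y\<in>S. f y \<in> ER"
proof (rule ccontr)
  assume "\<not> (\<exists>y\<in>S. f y \<in> ER)"
  then have "S \<in> null_sets lebesgue" using assms by (intro ER_null) auto
  then show False using assms(3) by (simp add: measure_eq_0_null_sets)
qed

lemma g_right:
  assumes conn: "connected ER" and y: "0 < y" "y < 1" and \<epsilon>: "\<epsilon> > 0"
  shows "\<exists>y'. y < y' \<and> y' < 1 \<and> g y' < g y + \<epsilon>"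
proof (rule ccontr)
  assume H: "\<not> (\<exists>y'. y < y' \<and> y' < 1 \<and> g y' < g y + \<epsilon>)"
  have Fy: "F v = y" if v: "g y < v" "v < g y + \<epsilon>" for v
  proof -
    have "y \<le> F v" using g_gt y v by blast
    moreover have "\<not> F v > y"
    proof
      assume Fv: "F v > y"
      define y' where "y' = (y + min (F v) 1) / 2"
      have y': "y < y'" "y' < 1" "y' < F v" using Fv y by (auto simp: y'_def)
      then have "g y' \<ge> g y + \<epsilon>" using H by auto
      then have "v < g y'" using v by simp
      then have "F v < y'" using y' y by (intro g_lt_imp) auto
      then show False using y' by simp
    qed
    ultimately show ?thesis by simp
  qed
  define z where "z = g y + \<epsilon> / 2"
  define e where "e = \<epsilon> / 4"
  have e0: "e > 0" using \<epsilon> by (simp add: e_def)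
  have F1: "F (z - e) = y" "F (z + e) = y" using \<epsilon> by (auto simp: z_def e_def intro!: Fy)
  have sub: "A (z - e) \<subseteq> A (z + e)" using e0 by (auto simp: A_def)
  have "measure lebesgue (A (z + e) - A (z - e)) = measure lebesgue (A (z + e)) - measure lebesgue (A (z - e))"
    by (rule measurable_measure_Diff[OF A_fm A_sets sub])
  also have "\<dots> = 0"
  proof -
    have "measure lebesgue (A (z + e)) = y * m" "measure lebesgue (A (z - e)) = y * m"
      using F1 by (simp_all add: measA_F)
    then show ?thesis by simp
  qed
  finally have "emeasure lebesgue (A (z + e) - A (z - e)) = 0"
    using emeasure_eq_measure2[OF fmeasurable_Diff[OF A_fm A_sets]] by simp
  moreover have "{x\<in>\<Omega>. \<bar>f x - z\<bar> < e} \<subseteq> A (z + e) - A (z - e)" by (auto simp: A_def abs_less_iff)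
  ultimately have "emeasure lebesgue {x\<in>\<Omega>. \<bar>f x - z\<bar> < e} = 0"
    by (metis (no_types, lifting) A_sets emeasure_mono le_zero_eq sets.Diff)
  then have zn: "z \<notin> ER" using e0 by (auto simp: ER_def ess_range_def intro!: exI[of _ e])
  have "measure lebesgue (A (z - e)) = y * m" using F1 by (simp add: measA_F)
  then have "measure lebesgue (A (z - e)) > 0" using m_pos y by simp
  then obtain x1 where x1: "x1 \<in> A (z - e)" "f x1 \<in> ER"
    using ER_exists[OF A_sets] by (auto simp: A_def)
  have "measure lebesgue (\<Omega> - A (z + e)) = m - measure lebesgue (A (z + e))"
    unfolding m_def by (rule measurable_measure_Diff[OF Om_fm A_sets]) (auto simp: A_def)
  also have "\<dots> = m - y * m" using F1 by (simp add: measA_F)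
  also have "\<dots> > 0" using y m_pos by (simp add: algebra_simps)
  finally obtain x2 where x2: "x2 \<in> \<Omega> - A (z + e)" "f x2 \<in> ER"
    using ER_exists[OF sets.Diff[OF Om_sets A_sets]] by blast
  have "f x1 \<le> z" "z \<le> f x2" using x1 x2 e0 by (auto simp: A_def)
  then have "z \<in> ER" using conn x1 x2 unfolding connected_iff_interval by blast
  then show False using zn by simp
qed

lemma g_cont:
  assumes conn: "connected ER" and y: "0 < y" "y < 1" and \<epsilon>: "\<epsilon> > 0"
  shows "\<exists>\<delta>>0. \<forall>y'. \<bar>y' - y\<bar> < \<delta> \<longrightarrow> \<bar>g y' - g y\<bar> < \<epsilon>"
proof -
  obtain yl where yl: "0 < yl" "yl < y" "g yl > g y - \<epsilon>" using g_left[OF y \<epsilon>] by blast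
  obtain yr where yr: "y < yr" "yr < 1" "g yr < g y + \<epsilon>" using g_right[OF conn y \<epsilon>] by blast
  define \<delta> where "\<delta> = min (y - yl) (yr - y)"
  have "\<delta> > 0" using yl yr by (simp add: \<delta>_def)
  moreover have "\<bar>g y' - g y\<bar> < \<epsilon>" if "\<bar>y' - y\<bar> < \<delta>" for y'
  proof -
    have "yl < y'" "y' < yr" using that by (auto simp: \<delta>_def abs_less_iff)
    then have "g yl \<le> g y'" "g y' \<le> g yr" using yl yr by (auto intro!: g_mono)
    then show ?thesis using yl yr by (simp add: abs_less_iff)
  qed
  ultimately show ?thesis by blast
qed

lemma g_F_strict:
  assumes conn: "connected ER" and y: "0 < y" "y < 1" and u: "g y < u"
  shows "y < F u"
proof -
  obtain y' where y': "y < y'" "y' < 1" "g y' < g y + (u - g y)"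
    using g_right[OF conn y, of "u - g y"] u by auto
  then have "y' \<le> F u" using y by (intro g_gt) auto
  then show ?thesis using y' by simp
qed

lemma ER_ne: "ER \<noteq> {}"
  using ER_exists[OF Om_sets] m_pos by (auto simp: m_def)

lemma ER_ge: assumes "bdd_below (f ` \<Omega>)" "z \<in> ER" shows "Inf (f ` \<Omega>) \<le> z"
proof (rule ccontr)
  assume "\<not> Inf (f ` \<Omega>) \<le> z"
  then have e: "Inf (f ` \<Omega>) - z > 0" by simp
  have "{x\<in>\<Omega>. \<bar>f x - z\<bar> < Inf (f ` \<Omega>) - z} = {}"
  proof -
    have "Inf (f ` \<Omega>) \<le> f x" if "x \<in> \<Omega>" for x using assms(1) that by (simp add: cInf_lower)
    then show ?thesis by (force simp: abs_less_iff)
  qed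
  moreover have "emeasure lebesgue {x\<in>\<Omega>. \<bar>f x - z\<bar> < Inf (f ` \<Omega>) - z} > 0"
    using assms(2) e by (simp add: ER_def ess_range_def)
  ultimately show False by (metis emeasure_empty less_irrefl)
qed

lemma ER_le: assumes "bdd_above (f ` \<Omega>)" "z \<in> ER" shows "z \<le> Sup (f ` \<Omega>)"
proof (rule ccontr)
  assume "\<not> z \<le> Sup (f ` \<Omega>)"
  then have e: "z - Sup (f ` \<Omega>) > 0" by simp
  have "{x\<in>\<Omega>. \<bar>f x - z\<bar> < z - Sup (f ` \<Omega>)} = {}"
  proof -
    have "f x \<le> Sup (f ` \<Omega>)" if "x \<in> \<Omega>" for x using assms(1) that by (simp add: cSup_upper)
    then show ?thesis by (force simp: abs_less_iff)
  qed
  moreover have "emeasure lebesgue {x\<in>\<Omega>. \<bar>f x - z\<bar> < z - Sup (f ` \<Omega>)} > 0"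
    using assms(2) e by (simp add: ER_def ess_range_def)
  ultimately show False by (metis emeasure_empty less_irrefl)
qed

lemma pos_of_ER:
  assumes "z \<in> ER" "e > 0" "{x\<in>\<Omega>. \<bar>f x - z\<bar> < e} \<subseteq> S" "S \<in> fmeasurable lebesgue"
  shows "measure lebesgue S > 0"
proof -
  have "emeasure lebesgue {x\<in>\<Omega>. \<bar>f x - z\<bar> < e} > 0" using assms(1,2) by (simp add: ER_def ess_range_def)
  also have "\<dots> \<le> emeasure lebesgue S" using assms(3,4) by (intro emeasure_mono) auto
  finally show ?thesis using emeasure_eq_measure2[OF assms(4)] by simp
qed

lemma low_pos:
  assumes bb: "bdd_below (f ` \<Omega>)" and eq: "Inf (f ` \<Omega>) = ess_inf_on \<Omega> f" and \<epsilon>: "\<epsilon> > 0"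
  shows "measure lebesgue (B (Inf (f ` \<Omega>) + \<epsilon>)) > 0"
proof -
  have bER: "bdd_below ER" using ER_ge[OF bb] by (auto simp: bdd_below_def)
  have "Inf ER < Inf (f ` \<Omega>) + \<epsilon> / 2" using eq \<epsilon> by (simp add: ess_inf_on_def ER_def)
  then obtain z where z: "z \<in> ER" "z < Inf (f ` \<Omega>) + \<epsilon> / 2"
    using cInf_less_iff[OF ER_ne bER] by blast
  show ?thesis
  proof (rule pos_of_ER[OF z(1), of "\<epsilon>/2"])
    show "{x \<in> \<Omega>. \<bar>f x - z\<bar> < \<epsilon> / 2} \<subseteq> B (Inf (f ` \<Omega>) + \<epsilon>)"
    proof
      fix x assume "x \<in> {x \<in> \<Omega>. \<bar>f x - z\<bar> < \<epsilon> / 2}"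
      then have x: "x \<in> \<Omega>" "\<bar>f x - z\<bar> < \<epsilon> / 2" by auto
      from x(2) have "f x - z < \<epsilon> / 2" unfolding abs_less_iff by linarith
      note x = x(1) this
      then show "x \<in> B (Inf (f ` \<Omega>) + \<epsilon>)" using z(2) by (simp add: B_def)
    qed
  qed (use \<epsilon> B_fm in auto)
qed

lemma up_lt:
  assumes ba: "bdd_above (f ` \<Omega>)" and eq: "Sup (f ` \<Omega>) = ess_sup_on \<Omega> f" and \<epsilon>: "\<epsilon> > 0"
  shows "F (Sup (f ` \<Omega>) - \<epsilon>) < 1"
proof -
  have bER: "bdd_above ER" using ER_le[OF ba] by (auto simp: bdd_above_def)
  have "Sup (f ` \<Omega>) - \<epsilon> / 2 < Sup ER" using eq \<epsilon> by (simp add: ess_sup_on_def ER_def)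
  then obtain z where z: "z \<in> ER" "Sup (f ` \<Omega>) - \<epsilon> / 2 < z"
    using less_cSup_iff[OF ER_ne bER] by blast
  have fm: "\<Omega> - A (Sup (f ` \<Omega>) - \<epsilon>) \<in> fmeasurable lebesgue"
    by (rule fmeasurable_Diff[OF Om_fm A_sets])
  have "measure lebesgue (\<Omega> - A (Sup (f ` \<Omega>) - \<epsilon>)) > 0"
  proof (rule pos_of_ER[OF z(1), of "\<epsilon>/2"])
    show "{x \<in> \<Omega>. \<bar>f x - z\<bar> < \<epsilon> / 2} \<subseteq> \<Omega> - A (Sup (f ` \<Omega>) - \<epsilon>)"
    proof
      fix x assume "x \<in> {x \<in> \<Omega>. \<bar>f x - z\<bar> < \<epsilon> / 2}"
      then have x: "x \<in> \<Omega>" "\<bar>f x - z\<bar> < \<epsilon> / 2" by auto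
      from x(2) have "z - f x < \<epsilon> / 2" unfolding abs_less_iff by linarith
      note x = x(1) this
      then show "x \<in> \<Omega> - A (Sup (f ` \<Omega>) - \<epsilon>)" using z(2) by (simp add: A_def)
    qed
  qed (use \<epsilon> fm in auto)
  moreover have "measure lebesgue (\<Omega> - A (Sup (f ` \<Omega>) - \<epsilon>)) = m - measure lebesgue (A (Sup (f ` \<Omega>) - \<epsilon>))"
    unfolding m_def by (rule measurable_measure_Diff[OF Om_fm A_sets]) (auto simp: A_def)
  ultimately show ?thesis using m_pos by (simp add: F_def)
qed

lemma g_ge_inf: assumes bb: "bdd_below (f ` \<Omega>)" and y: "0 < y" "y < 1" shows "Inf (f ` \<Omega>) \<le> g y"
proof (rule ccontr)
  assume "\<not> Inf (f ` \<Omega>) \<le> g y"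
  define u where "u = (g y + Inf (f ` \<Omega>)) / 2"
  have u: "g y < u" "u < Inf (f ` \<Omega>)" using \<open>\<not> Inf (f ` \<Omega>) \<le> g y\<close> by (auto simp: u_def)
  then have "y \<le> F u" using y by (intro g_gt) auto
  moreover have "A u = {}"
  proof -
    have "Inf (f ` \<Omega>) \<le> f x" if "x \<in> \<Omega>" for x using bb that by (simp add: cInf_lower)
    then show ?thesis using u by (force simp: A_def)
  qed
  ultimately show False using y by (simp add: F_def)
qed

lemma g_le_sup: assumes ba: "bdd_above (f ` \<Omega>)" and y: "0 < y" "y < 1" shows "g y \<le> Sup (f ` \<Omega>)"
proof -
  have "A (Sup (f ` \<Omega>)) = \<Omega>" using ba by (auto simp: A_def cSup_upper)
  then have "F (Sup (f ` \<Omega>)) = 1" using m_pos by (simp add: F_def m_def)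
  then show ?thesis using y by (intro g_le) auto
qed

end

context setting begin

definition "s n = sorted_samples \<Omega> f (N n) (x n)"

lemma s_eq: "s n = sorted_list_of_multiset (image_mset (\<lambda>i. f (x n i)) (mset_set (I n)))"
  by (simp add: s_def sorted_samples_def I_def)

lemma s_sorted: "sorted (s n)" by (simp add: s_eq)

lemma s_len: "length (s n) = c n"
  by (simp add: s_eq length_samples[OF finI] c_def)

lemma s_filter: "length (filter P (s n)) = card {i\<in>I n. P (f (x n i))}"
  by (simp add: s_eq length_filter_samples[OF finI])

lemma s_nth: "k < length (s n) \<Longrightarrow> s n ! k \<in> f ` \<Omega>"
proof -
  assume "k < length (s n)"
  then have "s n ! k \<in> set (s n)" by simp
  then show ?thesis using finI[of n] by (auto simp: s_eq I_def)
qed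

lemma HU_gen:
  assumes q: "q > y" and E: "\<And>\<delta>. \<delta> > 0 \<Longrightarrow> eventually (\<lambda>n. real (card {i\<in>I n. f (x n i) < u}) \<ge> (q - \<delta>) * real (c n)) sequentially"
  shows "\<exists>\<delta>>0. eventually (\<lambda>n. \<forall>k<length (s n). real k \<le> (y + \<delta>) * real (length (s n)) \<longrightarrow> s n ! k < u) sequentially"
proof -
  define \<delta> where "\<delta> = (q - y) / 3"
  have d: "\<delta> > 0" using q by (simp add: \<delta>_def)
  have "eventually (\<lambda>n. \<forall>k<length (s n). real k \<le> (y + \<delta>) * real (length (s n)) \<longrightarrow> s n ! k < u) sequentially"
    using E[OF d]
  proof (rule eventually_mono)
    fix n assume h: "real (card {i\<in>I n. f (x n i) < u}) \<ge> (q - \<delta>) * real (c n)"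
    show "\<forall>k<length (s n). real k \<le> (y + \<delta>) * real (length (s n)) \<longrightarrow> s n ! k < u"
    proof (intro allI impI)
      fix k assume k: "k < length (s n)" "real k \<le> (y + \<delta>) * real (length (s n))"
      have cpos: "real (c n) > 0" using k(1) s_len by simp
      have "(y + \<delta>) * real (c n) < (q - \<delta>) * real (c n)"
        using cpos d q by (intro mult_strict_right_mono) (auto simp: \<delta>_def field_simps)
      then have "real k < real (card {i\<in>I n. f (x n i) < u})" using h k(2) s_len by simp
      then have "k < length (filter (\<lambda>v. v < u) (s n))" by (simp add: s_filter)
      then show "s n ! k < u" using sorted_nth_lt_count[OF s_sorted k(1)] by blast
    qed
  qed
  then show ?thesis using d by blast
qed

lemma HL_gen:
  assumes q: "q < y" and E: "\<And>\<delta>. \<delta> > 0 \<Longrightarrow> eventually (\<lambda>n. real (card {i\<in>I n. f (x n i) \<le> v}) \<le> (q + \<delta>) * real (c n)) sequentially"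
  shows "\<exists>\<delta>>0. eventually (\<lambda>n. \<forall>k<length (s n). real k \<ge> (y - \<delta>) * real (length (s n)) \<longrightarrow> s n ! k > v) sequentially"
proof -
  define \<delta> where "\<delta> = (y - q) / 3"
  have d: "\<delta> > 0" using q by (simp add: \<delta>_def)
  have "eventually (\<lambda>n. \<forall>k<length (s n). real k \<ge> (y - \<delta>) * real (length (s n)) \<longrightarrow> s n ! k > v) sequentially"
    using E[OF d]
  proof (rule eventually_mono)
    fix n assume h: "real (card {i\<in>I n. f (x n i) \<le> v}) \<le> (q + \<delta>) * real (c n)"
    show "\<forall>k<length (s n). real k \<ge> (y - \<delta>) * real (length (s n)) \<longrightarrow> s n ! k > v"
    proof (intro allI impI)
      fix k assume k: "k < length (s n)" "real k \<ge> (y - \<delta>) * real (length (s n))"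
      have cpos: "real (c n) > 0" using k(1) s_len by simp
      have "(q + \<delta>) * real (c n) < (y - \<delta>) * real (c n)"
        using cpos d q by (intro mult_strict_right_mono) (auto simp: \<delta>_def field_simps)
      then have "real (card {i\<in>I n. f (x n i) \<le> v}) < real k" using h k(2) s_len by simp
      then have "length (filter (\<lambda>w. w \<le> v) (s n)) \<le> k" by (simp add: s_filter)
      then show "s n ! k > v" using sorted_nth_gt_count[OF s_sorted k(1)] by blast
    qed
  qed
  then show ?thesis using d by blast
qed

lemma measB_div: "measure lebesgue (B u) / m \<ge> F v" if "v < u"
proof -
  have "measure lebesgue (A v) \<le> measure lebesgue (B u)"
    using that by (intro measure_mono_fmeasurable[OF _ A_sets B_fm]) (auto simp: A_def B_def)
  then show ?thesis using m_pos by (simp add: F_def divide_right_mono)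
qed

lemma HU_mid:
  assumes conn: "connected ER" and y: "0 < y" "y < 1" and \<epsilon>: "\<epsilon> > 0"
  shows "\<exists>\<delta>>0. eventually (\<lambda>n. \<forall>k<length (s n). real k \<le> (y + \<delta>) * real (length (s n)) \<longrightarrow> s n ! k \<le> g y + \<epsilon>) sequentially"
proof -
  have "y < F (g y + \<epsilon> / 2)" using \<epsilon> by (intro g_F_strict[OF conn y]) simp
  also have "\<dots> \<le> measure lebesgue (B (g y + \<epsilon>)) / m" using \<epsilon> by (intro measB_div) simp
  finally obtain \<delta> where "\<delta> > 0" and ev: "eventually (\<lambda>n. \<forall>k<length (s n). real k \<le> (y + \<delta>) * real (length (s n)) \<longrightarrow> s n ! k < g y + \<epsilon>) sequentially"
    using HU_gen[of y _ "g y + \<epsilon>"] ev_lt_ratio by blast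
  have "eventually (\<lambda>n. \<forall>k<length (s n). real k \<le> (y + \<delta>) * real (length (s n)) \<longrightarrow> s n ! k \<le> g y + \<epsilon>) sequentially"
    using ev by (rule eventually_mono) (meson less_imp_le)
  then show ?thesis using \<open>\<delta> > 0\<close> by blast
qed

lemma HL_mid:
  assumes y: "0 < y" "y < 1" and \<epsilon>: "\<epsilon> > 0"
  shows "\<exists>\<delta>>0. eventually (\<lambda>n. \<forall>k<length (s n). real k \<ge> (y - \<delta>) * real (length (s n)) \<longrightarrow> s n ! k \<ge> g y - \<epsilon>) sequentially"
proof -
  have "F (g y - \<epsilon>) < y" using \<epsilon> by (intro g_lt_imp[OF y]) simp
  then obtain \<delta> where "\<delta> > 0" and ev: "eventually (\<lambda>n. \<forall>k<length (s n). real k \<ge> (y - \<delta>) * real (length (s n)) \<longrightarrow> s n ! k > g y - \<epsilon>) sequentially"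
    using HL_gen[of "F (g y - \<epsilon>)" y "g y - \<epsilon>"] ev_le_ratio by (auto simp: F_def)
  have "eventually (\<lambda>n. \<forall>k<length (s n). real k \<ge> (y - \<delta>) * real (length (s n)) \<longrightarrow> s n ! k \<ge> g y - \<epsilon>) sequentially"
    using ev by (rule eventually_mono) (meson less_imp_le)
  then show ?thesis using \<open>\<delta> > 0\<close> by blast
qed

end

context setting begin

lemma g0: "g 0 = ess_inf_on \<Omega> f" by (simp add: mono_rearr_def)
lemma g1: "g 1 = ess_sup_on \<Omega> f" by (simp add: mono_rearr_def)

lemma HU_0:
  assumes bb: "bdd_below (f ` \<Omega>)" and eq: "Inf (f ` \<Omega>) = ess_inf_on \<Omega> f" and \<epsilon>: "\<epsilon> > 0"
  shows "\<exists>\<delta>>0. eventually (\<lambda>n. \<forall>k<length (s n). real k \<le> (0 + \<delta>) * real (length (s n)) \<longrightarrow> s n ! k \<le> g 0 + \<epsilon>) sequentially"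
proof -
  have "0 < measure lebesgue (B (Inf (f ` \<Omega>) + \<epsilon>)) / m" using low_pos[OF bb eq \<epsilon>] m_pos by simp
  then obtain \<delta> where "\<delta> > 0" and ev: "eventually (\<lambda>n. \<forall>k<length (s n). real k \<le> (0 + \<delta>) * real (length (s n)) \<longrightarrow> s n ! k < Inf (f ` \<Omega>) + \<epsilon>) sequentially"
    using HU_gen[of 0 _ "Inf (f ` \<Omega>) + \<epsilon>"] ev_lt_ratio by blast
  have "eventually (\<lambda>n. \<forall>k<length (s n). real k \<le> (0 + \<delta>) * real (length (s n)) \<longrightarrow> s n ! k \<le> g 0 + \<epsilon>) sequentially"
    using ev by (rule eventually_mono) (auto simp: g0 eq[symmetric] less_imp_le)
  then show ?thesis using \<open>\<delta> > 0\<close> by blast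
qed

lemma HL_0:
  assumes bb: "bdd_below (f ` \<Omega>)" and eq: "Inf (f ` \<Omega>) = ess_inf_on \<Omega> f" and \<epsilon>: "\<epsilon> > 0"
  shows "\<exists>\<delta>>0. eventually (\<lambda>n. \<forall>k<length (s n). real k \<ge> (0 - \<delta>) * real (length (s n)) \<longrightarrow> s n ! k \<ge> g 0 - \<epsilon>) sequentially"
proof -
  have "s n ! k \<ge> g 0 - \<epsilon>" if kl: "k < length (s n)" for n k
  proof -
    obtain z where "z \<in> \<Omega>" "s n ! k = f z" using s_nth[OF kl] by blast
    then have "Inf (f ` \<Omega>) \<le> s n ! k" using bb by (simp add: cInf_lower)
    then show ?thesis using \<epsilon> by (simp add: g0 eq[symmetric])
  qed
  then show ?thesis by (intro exI[of _ 1]) auto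
qed

lemma HU_1:
  assumes ba: "bdd_above (f ` \<Omega>)" and eq: "Sup (f ` \<Omega>) = ess_sup_on \<Omega> f" and \<epsilon>: "\<epsilon> > 0"
  shows "\<exists>\<delta>>0. eventually (\<lambda>n. \<forall>k<length (s n). real k \<le> (1 + \<delta>) * real (length (s n)) \<longrightarrow> s n ! k \<le> g 1 + \<epsilon>) sequentially"
proof -
  have "s n ! k \<le> g 1 + \<epsilon>" if kl: "k < length (s n)" for n k
  proof -
    obtain z where "z \<in> \<Omega>" "s n ! k = f z" using s_nth[OF kl] by blast
    then have "s n ! k \<le> Sup (f ` \<Omega>)" using ba by (simp add: cSup_upper)
    then show ?thesis using \<epsilon> by (simp add: g1 eq[symmetric])
  qed
  then show ?thesis by (intro exI[of _ 1]) auto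
qed

lemma HL_1:
  assumes ba: "bdd_above (f ` \<Omega>)" and eq: "Sup (f ` \<Omega>) = ess_sup_on \<Omega> f" and \<epsilon>: "\<epsilon> > 0"
  shows "\<exists>\<delta>>0. eventually (\<lambda>n. \<forall>k<length (s n). real k \<ge> (1 - \<delta>) * real (length (s n)) \<longrightarrow> s n ! k \<ge> g 1 - \<epsilon>) sequentially"
proof -
  have "F (Sup (f ` \<Omega>) - \<epsilon>) < 1" by (rule up_lt[OF ba eq \<epsilon>])
  then obtain \<delta> where "\<delta> > 0" and ev: "eventually (\<lambda>n. \<forall>k<length (s n). real k \<ge> (1 - \<delta>) * real (length (s n)) \<longrightarrow> s n ! k > Sup (f ` \<Omega>) - \<epsilon>) sequentially"
    using HL_gen[of "F (Sup (f ` \<Omega>) - \<epsilon>)" 1 "Sup (f ` \<Omega>) - \<epsilon>"] ev_le_ratio by (auto simp: F_def)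
  have "eventually (\<lambda>n. \<forall>k<length (s n). real k \<ge> (1 - \<delta>) * real (length (s n)) \<longrightarrow> s n ! k \<ge> g 1 - \<epsilon>) sequentially"
    using ev by (rule eventually_mono) (auto simp: g1 eq[symmetric] less_imp_le)
  then show ?thesis using \<open>\<delta> > 0\<close> by blast
qed

lemma cont_mid:
  assumes conn: "connected ER" and lh: "0 < lo" "hi < 1"
  shows "continuous_on {lo..hi} g"
  unfolding continuous_on_iff
proof (intro ballI allI impI)
  fix y e :: real assume y: "y \<in> {lo..hi}" and e: "e > 0"
  then obtain \<delta> where "\<delta> > 0" "\<forall>y'. \<bar>y' - y\<bar> < \<delta> \<longrightarrow> \<bar>g y' - g y\<bar> < e"
    using g_cont[OF conn _ _ e, of y] lh by auto
  then show "\<exists>d>0. \<forall>x'\<in>{lo..hi}. dist x' y < d \<longrightarrow> dist (g x') (g y) < e"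
    by (auto simp: dist_real_def)
qed

lemma cont_low:
  assumes conn: "connected ER" and bb: "bdd_below (f ` \<Omega>)" and eq: "Inf (f ` \<Omega>) = ess_inf_on \<Omega> f"
    and al: "\<alpha> < 1"
  shows "continuous_on {0..\<alpha>} g"
  unfolding continuous_on_iff
proof (intro ballI allI impI)
  fix y e :: real assume y: "y \<in> {0..\<alpha>}" and e: "e > 0"
  show "\<exists>d>0. \<forall>x'\<in>{0..\<alpha>}. dist x' y < d \<longrightarrow> dist (g x') (g y) < e"
  proof (cases "y = 0")
    case True
    define i0 where "i0 = Inf (f ` \<Omega>)"
    have e2: "e / 2 > 0" using e by simp
    define d where "d = F (i0 + e / 2)"
    have "0 < measure lebesgue (B (i0 + e / 2)) / m" using low_pos[OF bb eq e2] m_pos by (simp add: i0_def)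
    also have "\<dots> \<le> F (i0 + e / 2)"
    proof -
      have "measure lebesgue (B (i0 + e / 2)) \<le> measure lebesgue (A (i0 + e / 2))"
        by (intro measure_mono_fmeasurable[OF _ B_sets A_fm]) (auto simp: A_def B_def)
      then show ?thesis using m_pos by (simp add: F_def divide_right_mono)
    qed
    finally have d0: "d > 0" by (simp add: d_def)
    have "dist (g x') (g y) < e" if x': "x' \<in> {0..\<alpha>}" "dist x' y < d" for x'
    proof (cases "x' = 0")
      case True then show ?thesis using \<open>y = 0\<close> e by simp
    next
      case False
      then have x01: "0 < x'" "x' < 1" using x' al by auto
      have "x' < d" using x' \<open>y = 0\<close> x01 by (simp add: dist_real_def)
      then have "g x' \<le> i0 + e / 2" using x01 by (intro g_le) (auto simp: d_def)
      moreover have "i0 \<le> g x'" using g_ge_inf[OF bb x01] by (simp add: i0_def)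
      moreover have "g y = i0" using \<open>y = 0\<close> by (simp add: g0 eq i0_def)
      ultimately show ?thesis using e by (simp add: dist_real_def abs_less_iff)
    qed
    then show ?thesis using d0 by blast
  next
    case False
    then have y01: "0 < y" "y < 1" using y al by auto
    obtain \<delta> where \<delta>: "\<delta> > 0" "\<forall>y'. \<bar>y' - y\<bar> < \<delta> \<longrightarrow> \<bar>g y' - g y\<bar> < e"
      using g_cont[OF conn y01 e] by blast
    have "dist (g x') (g y) < e" if x': "x' \<in> {0..\<alpha>}" "dist x' y < min \<delta> y" for x'
      using \<delta>(2) x' by (simp add: dist_real_def)
    moreover have "min \<delta> y > 0" using \<delta> y01 by simp
    ultimately show ?thesis by blast
  qed
qed

lemma cont_high:
  assumes conn: "connected ER" and ba: "bdd_above (f ` \<Omega>)" and eq: "Sup (f ` \<Omega>) = ess_sup_on \<Omega> f"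
    and al: "0 < \<alpha>"
  shows "continuous_on {\<alpha>..1} g"
  unfolding continuous_on_iff
proof (intro ballI allI impI)
  fix y e :: real assume y: "y \<in> {\<alpha>..1}" and e: "e > 0"
  show "\<exists>d>0. \<forall>x'\<in>{\<alpha>..1}. dist x' y < d \<longrightarrow> dist (g x') (g y) < e"
  proof (cases "y = 1")
    case True
    define s0 where "s0 = Sup (f ` \<Omega>)"
    have e2: "e / 2 > 0" using e by simp
    define d where "d = 1 - F (s0 - e / 2)"
    have d0: "d > 0" using up_lt[OF ba eq e2] by (simp add: d_def s0_def)
    have "dist (g x') (g y) < e" if x': "x' \<in> {\<alpha>..1}" "dist x' y < d" for x'
    proof (cases "x' = 1")
      case True then show ?thesis using \<open>y = 1\<close> e by simp
    next
      case False
      then have x01: "0 < x'" "x' < 1" using x' al by auto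
      have "F (s0 - e / 2) < x'" using x' \<open>y = 1\<close> x01 by (simp add: dist_real_def d_def)
      then have "s0 - e / 2 \<le> g x'" using x01 g_gt[OF x01, of "s0 - e/2"] by force
      moreover have "g x' \<le> s0" using g_le_sup[OF ba x01] by (simp add: s0_def)
      moreover have "g y = s0" using \<open>y = 1\<close> by (simp add: g1 eq s0_def)
      ultimately show ?thesis using e by (simp add: dist_real_def abs_less_iff)
    qed
    then show ?thesis using d0 by blast
  next
    case False
    then have y01: "0 < y" "y < 1" using y al by auto
    obtain \<delta> where \<delta>: "\<delta> > 0" "\<forall>y'. \<bar>y' - y\<bar> < \<delta> \<longrightarrow> \<bar>g y' - g y\<bar> < e"
      using g_cont[OF conn y01 e] by blast
    have "dist (g x') (g y) < e" if x': "x' \<in> {\<alpha>..1}" "dist x' y < min \<delta> (1 - y)" for x'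
      using \<delta>(2) x' by (simp add: dist_real_def)
    moreover have "min \<delta> (1 - y) > 0" using \<delta> y01 by simp
    ultimately show ?thesis by blast
  qed
qed

lemma s_inf: "filterlim (\<lambda>n. length (s n)) at_top sequentially"
  using c_inf by (simp add: s_len)

lemma sr_eq: "sample_rearr \<Omega> f (N n) (x n) = lin_spline (s n)"
  by (simp add: sample_rearr_def s_def)

lemma part1:
  assumes conn: "connected ER" and ab: "0 < \<alpha>" "\<alpha> \<le> \<beta>" "\<beta> < 1"
  shows "uniform_limit {\<alpha>..\<beta>} (\<lambda>n. sample_rearr \<Omega> f (N n) (x n)) g sequentially"
  unfolding sr_eq
proof (rule conv_abstract[OF s_sorted s_inf])
  show "0 \<le> \<alpha>" "\<alpha> \<le> \<beta>" "\<beta> \<le> 1" using ab by auto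
  show "continuous_on {\<alpha>..\<beta>} g" using cont_mid[OF conn] ab by auto
  show "\<exists>\<delta>>0. eventually (\<lambda>n. \<forall>k<length (s n). real k \<le> (y + \<delta>) * real (length (s n)) \<longrightarrow> s n ! k \<le> g y + \<epsilon>) sequentially"
    if "y \<in> {\<alpha>..\<beta>}" "\<epsilon> > 0" for y \<epsilon> using HU_mid[OF conn _ _ that(2), of y] that ab by auto
  show "\<exists>\<delta>>0. eventually (\<lambda>n. \<forall>k<length (s n). real k \<ge> (y - \<delta>) * real (length (s n)) \<longrightarrow> s n ! k \<ge> g y - \<epsilon>) sequentially"
    if "y \<in> {\<alpha>..\<beta>}" "\<epsilon> > 0" for y \<epsilon> using HL_mid[OF _ _ that(2), of y] that ab by auto
qed

lemma part2:
  assumes conn: "connected ER" and bb: "bdd_below (f ` \<Omega>)" and eq: "Inf (f ` \<Omega>) = ess_inf_on \<Omega> f"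
    and al: "0 \<le> \<alpha>" "\<alpha> < 1"
  shows "uniform_limit {0..\<alpha>} (\<lambda>n. sample_rearr \<Omega> f (N n) (x n)) g sequentially"
  unfolding sr_eq
proof (rule conv_abstract[OF s_sorted s_inf])
  show "0 \<le> (0::real)" "0 \<le> \<alpha>" "\<alpha> \<le> 1" using al by auto
  show "continuous_on {0..\<alpha>} g" using cont_low[OF conn bb eq al(2)] .
  show "\<exists>\<delta>>0. eventually (\<lambda>n. \<forall>k<length (s n). real k \<le> (y + \<delta>) * real (length (s n)) \<longrightarrow> s n ! k \<le> g y + \<epsilon>) sequentially"
    if "y \<in> {0..\<alpha>}" "\<epsilon> > 0" for y \<epsilon>
  proof (cases "y = 0")
    case True then show ?thesis using HU_0[OF bb eq that(2)] by simp
  next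
    case False then show ?thesis using HU_mid[OF conn _ _ that(2), of y] that al by auto
  qed
  show "\<exists>\<delta>>0. eventually (\<lambda>n. \<forall>k<length (s n). real k \<ge> (y - \<delta>) * real (length (s n)) \<longrightarrow> s n ! k \<ge> g y - \<epsilon>) sequentially"
    if "y \<in> {0..\<alpha>}" "\<epsilon> > 0" for y \<epsilon>
  proof (cases "y = 0")
    case True then show ?thesis using HL_0[OF bb eq that(2)] by simp
  next
    case False then show ?thesis using HL_mid[OF _ _ that(2), of y] that al by auto
  qed
qed

lemma part3:
  assumes conn: "connected ER" and ba: "bdd_above (f ` \<Omega>)" and eq: "Sup (f ` \<Omega>) = ess_sup_on \<Omega> f"
    and al: "0 < \<alpha>" "\<alpha> \<le> 1"
  shows "uniform_limit {\<alpha>..1} (\<lambda>n. sample_rearr \<Omega> f (N n) (x n)) g sequentially"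
  unfolding sr_eq
proof (rule conv_abstract[OF s_sorted s_inf])
  show "0 \<le> \<alpha>" "\<alpha> \<le> 1" "(1::real) \<le> 1" using al by auto
  show "continuous_on {\<alpha>..1} g" using cont_high[OF conn ba eq al(1)] .
  show "\<exists>\<delta>>0. eventually (\<lambda>n. \<forall>k<length (s n). real k \<le> (y + \<delta>) * real (length (s n)) \<longrightarrow> s n ! k \<le> g y + \<epsilon>) sequentially"
    if "y \<in> {\<alpha>..1}" "\<epsilon> > 0" for y \<epsilon>
  proof (cases "y = 1")
    case True then show ?thesis using HU_1[OF ba eq that(2)] by simp
  next
    case False then show ?thesis using HU_mid[OF conn _ _ that(2), of y] that al by auto
  qed
  show "\<exists>\<delta>>0. eventually (\<lambda>n. \<forall>k<length (s n). real k \<ge> (y - \<delta>) * real (length (s n)) \<longrightarrow> s n ! k \<ge> g y - \<epsilon>) sequentially"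
    if "y \<in> {\<alpha>..1}" "\<epsilon> > 0" for y \<epsilon>
  proof (cases "y = 1")
    case True then show ?thesis using HL_1[OF ba eq that(2)] by simp
  next
    case False then show ?thesis using HL_mid[OF _ _ that(2), of y] that al by auto
  qed
qed

end

theorem theorem3p6:
  fixes \<Omega> :: "(real^'d) set" and f :: "real^'d \<Rightarrow> real"
    and a b :: "real^'d" and N :: "nat \<Rightarrow> 'd \<Rightarrow> nat"
    and x :: "nat \<Rightarrow> ('d \<Rightarrow> nat) \<Rightarrow> real^'d"
  assumes reg: "regular_set \<Omega>"
    and pos: "emeasure lebesgue \<Omega> > 0"
    and cont: "cont_ae_on \<Omega> f"
    and conn: "connected (ess_range \<Omega> f)"
    and rect: "\<Omega> \<subseteq> cbox a b"
    and Ninf: "\<forall>j. filterlim (\<lambda>n. N n j) at_top sequentially"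
    and grid: "asympt_uniform_grid a b N x"
  shows
   "(\<forall>\<alpha> \<beta>. 0 < \<alpha> \<and> \<alpha> \<le> \<beta> \<and> \<beta> < 1 \<longrightarrow>
       uniform_limit {\<alpha>..\<beta>} (\<lambda>n. sample_rearr \<Omega> f (N n) (x n)) (mono_rearr \<Omega> f) sequentially)
    \<and> (bdd_below (f ` \<Omega>) \<and> Inf (f ` \<Omega>) = ess_inf_on \<Omega> f \<longrightarrow>
       (\<forall>\<alpha>. 0 \<le> \<alpha> \<and> \<alpha> < 1 \<longrightarrow>
         uniform_limit {0..\<alpha>} (\<lambda>n. sample_rearr \<Omega> f (N n) (x n)) (mono_rearr \<Omega> f) sequentially))
    \<and> (bdd_above (f ` \<Omega>) \<and> Sup (f ` \<Omega>) = ess_sup_on \<Omega> f \<longrightarrow>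
       (\<forall>\<alpha>. 0 < \<alpha> \<and> \<alpha> \<le> 1 \<longrightarrow>
         uniform_limit {\<alpha>..1} (\<lambda>n. sample_rearr \<Omega> f (N n) (x n)) (mono_rearr \<Omega> f) sequentially))
    \<and> (bounded (f ` \<Omega>) \<and> ess_range \<Omega> f = {Inf (f ` \<Omega>)..Sup (f ` \<Omega>)} \<longrightarrow>
         uniform_limit {0..1} (\<lambda>n. sample_rearr \<Omega> f (N n) (x n)) (mono_rearr \<Omega> f) sequentially)"
proof -
  have ab: "a $ j < b $ j" for j
  proof (rule ccontr)
    assume nj: "\<not> a $ j < b $ j"
    have "emeasure lebesgue (cbox a b) = 0"
    proof (cases "cbox a b = {}")
      case True then show ?thesis by simp
    next
      case False
      then obtain z where "z \<in> cbox a b" by blast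
      then have le: "\<And>i. a $ i \<le> b $ i" unfolding mem_box_cart by (meson order_trans)
      have "measure lebesgue (cbox a b) = (\<Prod>i\<in>UNIV. b $ i - a $ i)"
        using le by (rule measure_lebesgue_cbox_cart)
      also have "\<dots> = 0" using nj le[of j] by (intro prod_zero) (auto intro!: exI[of _ j])
      finally show ?thesis using emeasure_eq_measure2[OF lmeasurable_cbox[of a b]] by simp
    qed
    moreover have "emeasure lebesgue \<Omega> \<le> emeasure lebesgue (cbox a b)"
      using rect by (intro emeasure_mono) (auto intro: closed_lebesgue)
    ultimately show False using pos by simp
  qed
  interpret setting a b N x \<Omega> f
    using ab Ninf grid reg pos cont rect by unfold_locales auto
  have conn': "connected ER" using conn by (simp add: ER_def)
  have P1: "\<forall>\<alpha> \<beta>. 0 < \<alpha> \<and> \<alpha> \<le> \<beta> \<and> \<beta> < 1 \<longrightarrow>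
       uniform_limit {\<alpha>..\<beta>} (\<lambda>n. sample_rearr \<Omega> f (N n) (x n)) (mono_rearr \<Omega> f) sequentially"
    using part1[OF conn'] by blast
  have P2: "bdd_below (f ` \<Omega>) \<and> Inf (f ` \<Omega>) = ess_inf_on \<Omega> f \<longrightarrow>
       (\<forall>\<alpha>. 0 \<le> \<alpha> \<and> \<alpha> < 1 \<longrightarrow>
         uniform_limit {0..\<alpha>} (\<lambda>n. sample_rearr \<Omega> f (N n) (x n)) (mono_rearr \<Omega> f) sequentially)"
    using part2[OF conn'] by blast
  have P3: "bdd_above (f ` \<Omega>) \<and> Sup (f ` \<Omega>) = ess_sup_on \<Omega> f \<longrightarrow>
       (\<forall>\<alpha>. 0 < \<alpha> \<and> \<alpha> \<le> 1 \<longrightarrow>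
         uniform_limit {\<alpha>..1} (\<lambda>n. sample_rearr \<Omega> f (N n) (x n)) (mono_rearr \<Omega> f) sequentially)"
    using part3[OF conn'] by blast
  have P4: "bounded (f ` \<Omega>) \<and> ess_range \<Omega> f = {Inf (f ` \<Omega>)..Sup (f ` \<Omega>)} \<longrightarrow>
         uniform_limit {0..1} (\<lambda>n. sample_rearr \<Omega> f (N n) (x n)) (mono_rearr \<Omega> f) sequentially"
  proof
    assume H: "bounded (f ` \<Omega>) \<and> ess_range \<Omega> f = {Inf (f ` \<Omega>)..Sup (f ` \<Omega>)}"
    have bb: "bdd_below (f ` \<Omega>)" and ba: "bdd_above (f ` \<Omega>)"
      using H bounded_imp_bdd_below bounded_imp_bdd_above by auto
    have ERe: "ER = {Inf (f ` \<Omega>)..Sup (f ` \<Omega>)}" using H by (simp add: ER_def)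
    then have le: "Inf (f ` \<Omega>) \<le> Sup (f ` \<Omega>)" using ER_ne by auto
    have e1: "Inf (f ` \<Omega>) = ess_inf_on \<Omega> f"
      using ERe le by (simp add: ess_inf_on_def ER_def[symmetric])
    have e2: "Sup (f ` \<Omega>) = ess_sup_on \<Omega> f"
      using ERe le by (simp add: ess_sup_on_def ER_def[symmetric])
    have "uniform_limit ({0..1/2} \<union> {1/2..1}) (\<lambda>n. sample_rearr \<Omega> f (N n) (x n)) (mono_rearr \<Omega> f) sequentially"
      using part2[OF conn' bb e1, of "1/2"] part3[OF conn' ba e2, of "1/2"]
      by (intro uniform_limit_on_Un) auto
    moreover have "{0..1/2} \<union> {1/2..1} = {0..(1::real)}" by auto
    ultimately show "uniform_limit {0..1} (\<lambda>n. sample_rearr \<Omega> f (N n) (x n)) (mono_rearr \<Omega> f) sequentially"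
      by simp
  qed
  show ?thesis using P1 P2 P3 P4 by blast
qed


end
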